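(* There exists $C>0$ such that for all $(x,\omega)\in S^*(\mathbb{R}^n)$: $\frac1C\tau^{2n}\le V(B_\tau(x,\omega))\le C\tau^{2n}$ if $\tau\in(0,1)$, and $\frac1C\tau^{n}\le V(B_\tau(x,\omega))\le C\tau^{n}$ if $\tau\ge1$. In particular $V(B_{c\tau}(x,\omega))\le C^2c^{2n}V(B_\tau(x,\omega))$ for all $\tau>0$, $c\ge1$, so $(S^*(\mathbb{R}^n),d,dx\,d\omega)$ is a doubling metric measure space.
   Context: Fix $n\ge2$. $S^*(\mathbb{R}^n):=\mathbb{R}^n\times S^{n-1}$ with measure $dx\,d\omega$ (Lebesgue measure times the standard surface measure on $S^{n-1}$). A piecewise $C^1$ curve $\gamma(s)=(x(s),\hat\xi(s))$, $s\in[0,1]$, is horizontal if $\hat\xi(s)\cdot x'(s)=0$ for a.e. $s$. The metric $d((x,\omega),(y,\nu))$ is the infimum of $\int_0^1|\gamma'(s)|ds$ over horizontal curves from $(x,\omega)$ to $(y,\nu)$, with $|\gamma'|^2=|x'|^2+|\hat\xi'|^2$ (Euclidean metric on $\mathbb{R}^n$, round metric on $S^{n-1}$). $B_\tau(x,\omega)$ denotes the open $d$-ball of radius $\tau$ about $(x,\omega)$ and $V(\cdot)$ the measure of a set. *)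

theory Defs
  imports "HOL-Analysis.Analysis"
begin

text \<open>Unit cotangent sphere bundle: points (x, w) with x in R^n and w in S^{n-1}.
  R^n is modelled by an arbitrary euclidean space 'a of dimension DIM('a).\<close>

definition cosphere :: "('a::euclidean_space \<times> 'a) set" where
  "cosphere = UNIV \<times> sphere 0 1"

definition horizontal_curve ::
  "(real \<Rightarrow> 'a::euclidean_space \<times> 'a) \<Rightarrow> ('a \<times> 'a) \<Rightarrow> ('a \<times> 'a) \<Rightarrow> bool" where
  "horizontal_curve g p q \<longleftrightarrow>
     g piecewise_C1_differentiable_on {0..1} \<and>
     (\<forall>s\<in>{0..1}. g s \<in> cosphere) \<and>
     g 0 = p \<and> g 1 = q \<and>
     (AE s in lborel. s \<in> {0..1} \<longrightarrow>
        snd (g s) \<bullet> vector_derivative (\<lambda>t. fst (g t)) (at s) = 0)"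

text \<open>Length: integral of |gamma'| with |gamma'|^2 = |x'|^2 + |xi'|^2 (this is exactly the
  norm on the product type; the round metric on S^{n-1} is the one induced from R^n).
  Taken as an ennreal-valued integral so that non-integrable speeds give infinite length.\<close>

definition curve_length :: "(real \<Rightarrow> 'a::euclidean_space \<times> 'a) \<Rightarrow> ennreal" where
  "curve_length g = (\<integral>\<^sup>+ s. ennreal (norm (vector_derivative g (at s))) * indicator {0..1} s \<partial>lborel)"

definition sR_dist :: "('a::euclidean_space \<times> 'a) \<Rightarrow> ('a \<times> 'a) \<Rightarrow> ennreal" where
  "sR_dist p q = (INF g \<in> {g. horizontal_curve g p q}. curve_length g)"

definition sR_ball :: "('a::euclidean_space \<times> 'a) \<Rightarrow> real \<Rightarrow> ('a \<times> 'a) set" where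
  "sR_ball p \<tau> = {q. sR_dist p q < ennreal \<tau>}"

text \<open>Standard surface measure on S^{n-1}: sigma(A) = n * Leb({r w : 0 < r <= 1, w in A}),
  realized as the pushforward of n * Lebesgue measure on the unit ball under x |-> x/|x|.\<close>

definition sphere_measure :: "'a::euclidean_space measure" where
  "sphere_measure = distr (density lborel (\<lambda>x. ennreal (real DIM('a)) * indicator (ball 0 1) x))
                          borel (\<lambda>x. sgn x)"

definition cosphere_measure :: "('a::euclidean_space \<times> 'a) measure" where
  "cosphere_measure = lborel \<Otimes>\<^sub>M sphere_measure"

definition vol :: "('a::euclidean_space \<times> 'a) set \<Rightarrow> ennreal" where
  "vol A = emeasure cosphere_measure A"

end

theory Submission
  imports Defs "HOL-Analysis.Analysis"
begin

lemma pc1_borel: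
  fixes g :: "real \<Rightarrow> 'b::euclidean_space"
  assumes "g piecewise_C1_differentiable_on {0..1}"
  obtains S F where "finite S" "F \<in> borel_measurable borel"
    "\<And>s. s \<in> {0<..<1} - S \<Longrightarrow> (g has_vector_derivative F s) (at s)"
    "\<And>s. s \<notin> {0<..<1} - S \<Longrightarrow> F s = 0"
proof -
  from assms obtain S where S: "finite S" "g C1_differentiable_on ({0..1} - S)"
    by (auto simp: piecewise_C1_differentiable_on_def)
  then obtain D where D: "\<forall>s\<in>{0..1} - S. (g has_vector_derivative D s) (at s)"
     "continuous_on ({0..1} - S) D"
    unfolding C1_differentiable_on_def by blast
  define T where "T = {0<..<1} - S"
  have T: "open T" using S(1) by (auto simp: T_def intro!: open_Diff finite_imp_closed)
  have cT: "continuous_on T D" using D(2) by (rule continuous_on_subset) (auto simp: T_def)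
  define F where "F s = indicator T s *\<^sub>R D s" for s
  have "F \<in> borel_measurable borel"
    unfolding F_def using T cT by (intro borel_measurable_continuous_on_indicator) auto
  then show ?thesis using S(1) D(1)
    by (intro that[of S F]) (auto simp: F_def T_def indicator_def)
qed

lemma curve_length_F:
  assumes "finite S" "\<And>s. s \<in> {0<..<1} - S \<Longrightarrow> (g has_vector_derivative F s) (at s)"
    "\<And>s. s \<notin> {0..1} \<Longrightarrow> F s = 0"
  shows "curve_length g = (\<integral>\<^sup>+ s. ennreal (norm (F s)) \<partial>lborel)"
  unfolding curve_length_def
proof (rule nn_integral_cong_AE)
  have "AE s in lborel. s \<notin> S \<union> {0,1}" using assms(1)
    by (intro AE_not_in finite_imp_null_set_lborel) auto
  then show "AE s in lborel. ennreal (norm (vector_derivative g (at s))) * indicator {0..1} s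
     = ennreal (norm (F s))"
    apply eventually_elim
    subgoal for s
      by (cases "s \<in> {0..1}") (auto simp: vector_derivative_at[OF assms(2)] assms(3) indicator_def)
    done
qed

lemma hc_smooth:
  fixes X Xi :: "real \<Rightarrow> 'a::euclidean_space"
  assumes dX: "\<And>s. (X has_vector_derivative X' s) (at s)"
    and dXi: "\<And>s. (Xi has_vector_derivative Xi' s) (at s)"
    and c1: "continuous_on UNIV X'" and c2: "continuous_on UNIV Xi'"
    and unit: "\<And>s. s \<in> {0..1} \<Longrightarrow> norm (Xi s) = 1"
    and hor: "\<And>s. s \<in> {0..1} \<Longrightarrow> Xi s \<bullet> X' s = 0"
    and sp: "\<And>s. s \<in> {0..1} \<Longrightarrow> norm (X' s, Xi' s) \<le> M"
  shows "horizontal_curve (\<lambda>s. (X s, Xi s)) (X 0, Xi 0) (X 1, Xi 1)"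
    and "curve_length (\<lambda>s. (X s, Xi s)) \<le> ennreal M"
proof -
  have d: "((\<lambda>s. (X s, Xi s)) has_vector_derivative (X' s, Xi' s)) (at s)" for s
    using dX dXi by (rule has_vector_derivative_Pair)
  have "(\<lambda>s. (X s, Xi s)) C1_differentiable_on {0..1}"
    unfolding C1_differentiable_on_def
    by (rule exI[of _ "\<lambda>s. (X' s, Xi' s)"])
       (auto intro!: d continuous_on_Pair continuous_on_subset[OF c1] continuous_on_subset[OF c2])
  then have pc: "(\<lambda>s. (X s, Xi s)) piecewise_C1_differentiable_on {0..1}"
    by (rule C1_differentiable_imp_piecewise)
  show "horizontal_curve (\<lambda>s. (X s, Xi s)) (X 0, Xi 0) (X 1, Xi 1)"
    unfolding horizontal_curve_def
    using pc unit hor vector_derivative_at[OF dX]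
    by (auto simp: cosphere_def intro!: AE_I2)
  have "curve_length (\<lambda>s. (X s, Xi s)) \<le> (\<integral>\<^sup>+ s. ennreal M * indicator {0..1::real} s \<partial>lborel)"
    unfolding curve_length_def
    apply (rule nn_integral_mono)
    using sp by (auto simp: vector_derivative_at[OF d] indicator_def intro!: ennreal_leI)
  also have "\<dots> = ennreal M" by (subst nn_integral_cmult_indicator) auto
  finally show "curve_length (\<lambda>s. (X s, Xi s)) \<le> ennreal M" .
qed

lemma hc_seg:
  fixes x v xi :: "'a::euclidean_space"
  assumes "norm xi = 1" "v \<bullet> xi = 0"
  shows "horizontal_curve (\<lambda>s. (x + s *\<^sub>R v, xi)) (x, xi) (x + v, xi)"
    "curve_length (\<lambda>s. (x + s *\<^sub>R v, xi)) \<le> ennreal (norm v)"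
proof -
  have dX: "((\<lambda>s. x + s *\<^sub>R v) has_vector_derivative v) (at s)" for s
    by (auto intro!: derivative_eq_intros)
  have dXi: "((\<lambda>s. xi) has_vector_derivative 0) (at s)" for s
    by (auto intro!: derivative_eq_intros)
  note h = hc_smooth[of "\<lambda>s. x + s *\<^sub>R v" "\<lambda>_. v" "\<lambda>_. xi" "\<lambda>_. 0", OF dX dXi]
  show "horizontal_curve (\<lambda>s. (x + s *\<^sub>R v, xi)) (x, xi) (x + v, xi)"
    using h(1)[of "norm v"] assms by (simp add: inner_commute)
  show "curve_length (\<lambda>s. (x + s *\<^sub>R v, xi)) \<le> ennreal (norm v)"
    using h(2)[of "norm v"] assms by (simp add: inner_commute)
qed

lemma unit_cs:
  fixes a w :: "'a::euclidean_space"
  assumes "norm a = 1" "norm w = 1" "a \<bullet> w = 0"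
  shows "norm (c *\<^sub>R a + s *\<^sub>R w) = sqrt (c^2 + s^2)"
proof -
  have "(c *\<^sub>R a + s *\<^sub>R w) \<bullet> (c *\<^sub>R a + s *\<^sub>R w) = c^2 * (a \<bullet> a) + s^2 * (w \<bullet> w) + 2 * c * s * (a \<bullet> w)"
    by (simp add: algebra_simps inner_commute power2_eq_square)
  also have "\<dots> = c^2 + s^2" using assms by (simp add: norm_eq_sqrt_inner)
  finally show ?thesis by (simp add: norm_eq_sqrt_inner)
qed

lemma hc_arc:
  fixes x a w :: "'a::euclidean_space"
  assumes a: "norm a = 1" "norm w = 1" "a \<bullet> w = 0"
  shows "horizontal_curve (\<lambda>s. (x, cos (\<alpha> + \<beta> * s) *\<^sub>R a + sin (\<alpha> + \<beta> * s) *\<^sub>R w))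
      (x, cos \<alpha> *\<^sub>R a + sin \<alpha> *\<^sub>R w) (x, cos (\<alpha>+\<beta>) *\<^sub>R a + sin (\<alpha>+\<beta>) *\<^sub>R w)"
    "curve_length (\<lambda>s. (x, cos (\<alpha> + \<beta> * s) *\<^sub>R a + sin (\<alpha> + \<beta> * s) *\<^sub>R w)) \<le> ennreal \<bar>\<beta>\<bar>"
proof -
  have dX: "((\<lambda>s. x) has_vector_derivative 0) (at s)" for s
    by (auto intro!: derivative_eq_intros)
  have dXi: "((\<lambda>s. cos (\<alpha> + \<beta> * s) *\<^sub>R a + sin (\<alpha> + \<beta> * s) *\<^sub>R w) has_vector_derivative
     ((\<beta> * cos (\<alpha> + \<beta> * s)) *\<^sub>R w - (\<beta> * sin (\<alpha> + \<beta> * s)) *\<^sub>R a)) (at s)" for s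
    by (auto intro!: derivative_eq_intros simp: algebra_simps)
  have n: "norm (cos t *\<^sub>R a + sin t *\<^sub>R w) = 1" for t
    using unit_cs[OF a] by simp
  have n2: "norm ((\<beta> * cos t) *\<^sub>R w - (\<beta> * sin t) *\<^sub>R a) = \<bar>\<beta>\<bar>" for t
  proof -
    have "norm ((\<beta> * cos t) *\<^sub>R w + (- (\<beta> * sin t)) *\<^sub>R a) = sqrt ((\<beta> * cos t)^2 + (- (\<beta> * sin t))^2)"
      using a by (intro unit_cs) (auto simp: inner_commute)
    also have "(\<beta> * cos t)^2 + (- (\<beta> * sin t))^2 = \<beta>^2"
      by (simp add: power_mult_distrib flip: distrib_left)
    finally show ?thesis by simp
  qed
  note h = hc_smooth[of "\<lambda>s. x" "\<lambda>_. 0" "\<lambda>s. cos (\<alpha> + \<beta> * s) *\<^sub>R a + sin (\<alpha> + \<beta> * s) *\<^sub>R w",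
     OF dX dXi _ _ n _, of "\<bar>\<beta>\<bar>"]
  show "horizontal_curve (\<lambda>s. (x, cos (\<alpha> + \<beta> * s) *\<^sub>R a + sin (\<alpha> + \<beta> * s) *\<^sub>R w))
      (x, cos \<alpha> *\<^sub>R a + sin \<alpha> *\<^sub>R w) (x, cos (\<alpha>+\<beta>) *\<^sub>R a + sin (\<alpha>+\<beta>) *\<^sub>R w)"
  proof -
    have "horizontal_curve (\<lambda>s. (x, cos (\<alpha> + \<beta> * s) *\<^sub>R a + sin (\<alpha> + \<beta> * s) *\<^sub>R w))
      (x, cos (\<alpha> + \<beta> * 0) *\<^sub>R a + sin (\<alpha> + \<beta> * 0) *\<^sub>R w) (x, cos (\<alpha>+\<beta> * 1) *\<^sub>R a + sin (\<alpha>+\<beta> * 1) *\<^sub>R w)"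
      by (rule h(1)) (auto simp: n2 intro!: continuous_intros)
    then show ?thesis by simp
  qed
  show "curve_length (\<lambda>s. (x, cos (\<alpha> + \<beta> * s) *\<^sub>R a + sin (\<alpha> + \<beta> * s) *\<^sub>R w)) \<le> ennreal \<bar>\<beta>\<bar>"
    by (rule h(2)) (auto simp: n2 intro!: continuous_intros)
qed

lemma null_affine_pre:
  fixes N :: "real set"
  assumes "N \<in> null_sets lborel" "c \<noteq> 0"
  shows "AE s in lborel. t + c * s \<notin> N"
proof -
  have N: "N \<in> sets borel" using assms(1) by auto
  have "AE s in lborel. s \<notin> N" using assms(1) by (rule AE_not_in)
  then show ?thesis using assms(2) N
    by (intro AE_borel_affine) (auto simp: pred_def)
qed

lemma join_deriv1:
  assumes "(g1 has_vector_derivative D) (at (2 * s))" "s < 1/2"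
  shows "((g1 +++ g2) has_vector_derivative (2 *\<^sub>R D)) (at s)"
proof -
  have d2: "((\<lambda>t::real. 2 * t) has_vector_derivative 2) (at s)"
    by (auto intro!: derivative_eq_intros)
  have "((g1 \<circ> (\<lambda>t. 2 * t)) has_vector_derivative (2 *\<^sub>R D)) (at s)"
    using vector_diff_chain_at[OF d2, of g1] vector_diff_chain_at[OF d2, of g2] assms(1) by auto
  then show ?thesis
    by (rule has_vector_derivative_transform_within_open[where S="{..<1/2}"])
       (use assms(2) in \<open>auto simp: joinpaths_def\<close>)
qed

lemma join_deriv2:
  assumes "(g2 has_vector_derivative D) (at (2 * s - 1))" "s > 1/2"
  shows "((g1 +++ g2) has_vector_derivative (2 *\<^sub>R D)) (at s)"
proof -
  have d2: "((\<lambda>t::real. 2 * t - 1) has_vector_derivative 2) (at s)"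
    by (auto intro!: derivative_eq_intros)
  have "((g2 \<circ> (\<lambda>t. 2 * t - 1)) has_vector_derivative (2 *\<^sub>R D)) (at s)"
    using vector_diff_chain_at[OF d2, of g1] vector_diff_chain_at[OF d2, of g2] assms(1) by auto
  then show ?thesis
    by (rule has_vector_derivative_transform_within_open[where S="{1/2<..}"])
       (use assms(2) in \<open>auto simp: joinpaths_def\<close>)
qed

lemma subsetNE: "{s \<in> space (lborel::real measure). \<not> (s \<in> A \<longrightarrow> P s)} \<subseteq> N \<Longrightarrow> x \<notin> N \<Longrightarrow> x \<in> A \<Longrightarrow> P x"
  by auto

lemma hc_join:
  fixes g1 g2 :: "real \<Rightarrow> 'a::euclidean_space \<times> 'a"
  assumes h1: "horizontal_curve g1 p q" and h2: "horizontal_curve g2 q r"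
  shows "horizontal_curve (g1 +++ g2) p r"
    "curve_length (g1 +++ g2) \<le> curve_length g1 + curve_length g2"
proof -
  have pc1: "g1 piecewise_C1_differentiable_on {0..1}" and pc2: "g2 piecewise_C1_differentiable_on {0..1}"
    using h1 h2 by (auto simp: horizontal_curve_def)
  have e: "g1 0 = p" "g1 1 = q" "g2 0 = q" "g2 1 = r"
    using h1 h2 by (auto simp: horizontal_curve_def)
  obtain S1 F1 where S1: "finite S1" "F1 \<in> borel_measurable borel"
    "\<And>s. s \<in> {0<..<1} - S1 \<Longrightarrow> (g1 has_vector_derivative F1 s) (at s)"
    "\<And>s. s \<notin> {0<..<1} - S1 \<Longrightarrow> F1 s = 0"
    using pc1_borel[OF pc1] by blast
  obtain S2 F2 where S2: "finite S2" "F2 \<in> borel_measurable borel"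
    "\<And>s. s \<in> {0<..<1} - S2 \<Longrightarrow> (g2 has_vector_derivative F2 s) (at s)"
    "\<And>s. s \<notin> {0<..<1} - S2 \<Longrightarrow> F2 s = 0"
    using pc1_borel[OF pc2] by blast
  have pcj: "(g1 +++ g2) piecewise_C1_differentiable_on {0..1}"
    using valid_path_join[of g1 g2] pc1 pc2 e by (auto simp: valid_path_def pathfinish_def pathstart_def)
  have cos: "\<forall>s\<in>{0..1}. (g1 +++ g2) s \<in> cosphere"
    using h1 h2 by (auto simp: horizontal_curve_def joinpaths_def)
  have ends: "(g1 +++ g2) 0 = p" "(g1 +++ g2) 1 = r" by (auto simp: joinpaths_def e)
  define S where "S = {1/2} \<union> (\<lambda>s. s/2) ` S1 \<union> (\<lambda>s. (s+1)/2) ` S2"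
  have fS: "finite S" using S1(1) S2(1) by (auto simp: S_def)
  define F where "F s = 2 *\<^sub>R F1 (2 * s) + 2 *\<^sub>R F2 (2 * s - 1)" for s
  have a1: "s < 1/2 \<Longrightarrow> s \<in> {0<..<1} - S \<Longrightarrow> 2 * s \<in> {0<..<1} - S1 \<and> F2 (2 * s - 1) = 0" for s
  proof -
    assume s: "s < 1/2" "s \<in> {0<..<1} - S"
    have "2 * s \<notin> S1"
    proof
      assume "2 * s \<in> S1"
      then have "(2 * s)/2 \<in> S" unfolding S_def by blast
      then show False using s by simp
    qed
    then show ?thesis using s S2(4)[of "2 * s - 1"] by auto
  qed
  have a2: "s > 1/2 \<Longrightarrow> s \<in> {0<..<1} - S \<Longrightarrow> 2 * s - 1 \<in> {0<..<1} - S2 \<and> F1 (2 * s) = 0" for s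
  proof -
    assume s: "s > 1/2" "s \<in> {0<..<1} - S"
    have "2 * s - 1 \<notin> S2"
    proof
      assume "2 * s - 1 \<in> S2"
      then have "((2 * s - 1)+1)/2 \<in> S" unfolding S_def by blast
      then show False using s by simp
    qed
    then show ?thesis using s S1(4)[of "2 * s"] by auto
  qed
  have h12: "s \<in> {0<..<1} - S \<Longrightarrow> s < 1/2 \<or> s > 1/2" for s by (auto simp: S_def)
  have dF: "((g1 +++ g2) has_vector_derivative F s) (at s)" if s: "s \<in> {0<..<1} - S" for s
  proof (cases "s < 1/2")
    case True
    with a1[OF True s] S1(3)[of "2 * s"] show ?thesis
      unfolding F_def by (auto intro!: join_deriv1)
  next
    case False
    then have "s > 1/2" using h12[OF s] by auto
    with a2[OF this s] S2(3)[of "2 * s - 1"] show ?thesis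
      unfolding F_def by (auto intro!: join_deriv2)
  qed
  have F0: "s \<notin> {0..1} \<Longrightarrow> F s = 0" for s
    using S1(4)[of "2 * s"] S2(4)[of "2 * s - 1"] by (auto simp: F_def)
  have cl: "curve_length (g1 +++ g2) = (\<integral>\<^sup>+ s. ennreal (norm (F s)) \<partial>lborel)"
    by (rule curve_length_F[OF fS dF F0])
  have cl1: "curve_length g1 = (\<integral>\<^sup>+ s. ennreal (norm (F1 s)) \<partial>lborel)"
    by (rule curve_length_F[OF S1(1) S1(3)]) (use S1(4) in auto)
  have cl2: "curve_length g2 = (\<integral>\<^sup>+ s. ennreal (norm (F2 s)) \<partial>lborel)"
    by (rule curve_length_F[OF S2(1) S2(3)]) (use S2(4) in auto)
  have m1[measurable]: "F1 \<in> borel_measurable borel" "F2 \<in> borel_measurable borel" using S1 S2 by auto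
  have sub1: "(\<integral>\<^sup>+ s. ennreal (2 * norm (F1 (2 * s))) \<partial>lborel) = (\<integral>\<^sup>+ s. ennreal (norm (F1 s)) \<partial>lborel)"
  proof -
    have "(\<integral>\<^sup>+ s. ennreal (norm (F1 s)) \<partial>lborel) = ennreal \<bar>2\<bar> * (\<integral>\<^sup>+ s. ennreal (norm (F1 (0 + 2 * s))) \<partial>lborel)"
      by (rule nn_integral_real_affine) auto
    also have "\<dots> = (\<integral>\<^sup>+ s. ennreal 2 * ennreal (norm (F1 (2 * s))) \<partial>lborel)"
      by (subst nn_integral_cmult) auto
    finally show ?thesis by (simp add: ennreal_mult)
  qed
  have sub2: "(\<integral>\<^sup>+ s. ennreal (2 * norm (F2 (2 * s - 1))) \<partial>lborel) = (\<integral>\<^sup>+ s. ennreal (norm (F2 s)) \<partial>lborel)"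
  proof -
    have "(\<integral>\<^sup>+ s. ennreal (norm (F2 s)) \<partial>lborel) = ennreal \<bar>2\<bar> * (\<integral>\<^sup>+ s. ennreal (norm (F2 ((-1) + 2 * s))) \<partial>lborel)"
      by (rule nn_integral_real_affine) auto
    also have "\<dots> = (\<integral>\<^sup>+ s. ennreal 2 * ennreal (norm (F2 (2 * s - 1))) \<partial>lborel)"
      by (subst nn_integral_cmult) auto
    finally show ?thesis by (simp add: ennreal_mult)
  qed
  have "(\<integral>\<^sup>+ s. ennreal (norm (F s)) \<partial>lborel) \<le>
       (\<integral>\<^sup>+ s. ennreal (2 * norm (F1 (2 * s))) + ennreal (2 * norm (F2 (2 * s - 1))) \<partial>lborel)"
    by (intro nn_integral_mono) (auto simp: F_def simp flip: ennreal_plus intro!: ennreal_leI order.trans[OF norm_triangle_ineq])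
  also have "\<dots> = (\<integral>\<^sup>+ s. ennreal (2 * norm (F1 (2 * s))) \<partial>lborel) + (\<integral>\<^sup>+ s. ennreal (2 * norm (F2 (2 * s - 1))) \<partial>lborel)"
    by (rule nn_integral_add) auto
  finally show "curve_length (g1 +++ g2) \<le> curve_length g1 + curve_length g2"
    using cl cl1 cl2 sub1 sub2 by simp
  obtain N1 where N1: "{s \<in> space lborel. \<not> (s \<in> {0..1} \<longrightarrow> snd (g1 s) \<bullet> vector_derivative (\<lambda>t. fst (g1 t)) (at s) = 0)} \<subseteq> N1"
     "N1 \<in> null_sets lborel"
    using h1 unfolding horizontal_curve_def by (auto elim!: AE_E simp: null_sets_def)
  obtain N2 where N2: "{s \<in> space lborel. \<not> (s \<in> {0..1} \<longrightarrow> snd (g2 s) \<bullet> vector_derivative (\<lambda>t. fst (g2 t)) (at s) = 0)} \<subseteq> N2"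
     "N2 \<in> null_sets lborel"
    using h2 unfolding horizontal_curve_def by (auto elim!: AE_E simp: null_sets_def)
  have ae1: "AE s in lborel. 0 + 2 * s \<notin> N1" by (rule null_affine_pre[OF N1(2)]) auto
  have ae2: "AE s in lborel. (-1) + 2 * s \<notin> N2" by (rule null_affine_pre[OF N2(2)]) auto
  have ae3: "AE s in lborel. s \<notin> S \<union> {0,1}" using fS
    by (intro AE_not_in finite_imp_null_set_lborel) auto
  have "AE s in lborel. s \<in> {0..1} \<longrightarrow> snd ((g1 +++ g2) s) \<bullet> vector_derivative (\<lambda>t. fst ((g1 +++ g2) t)) (at s) = 0"
    using ae1 ae2 ae3
  proof eventually_elim
    case (elim s)
    show ?case
    proof
      assume "s \<in> {0..1}"
      with elim have s: "s \<in> {0<..<1} - S" by auto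
      have vd: "vector_derivative (\<lambda>t. fst ((g1 +++ g2) t)) (at s) = fst (F s)"
        by (rule vector_derivative_at) (rule bounded_linear.has_vector_derivative[OF bounded_linear_fst dF[OF s]])
      show "snd ((g1 +++ g2) s) \<bullet> vector_derivative (\<lambda>t. fst ((g1 +++ g2) t)) (at s) = 0"
      proof (cases "s < 1/2")
        case True
        note a = a1[OF True s]
        have "2 * s \<notin> N1" using elim by simp
        then have P: "snd (g1 (2 * s)) \<bullet> vector_derivative (\<lambda>t. fst (g1 t)) (at (2 * s)) = 0"
          using subsetNE[OF N1(1)] a by auto
        have "vector_derivative (\<lambda>t. fst (g1 t)) (at (2 * s)) = fst (F1 (2 * s))"
          by (rule vector_derivative_at)
             (rule bounded_linear.has_vector_derivative[OF bounded_linear_fst S1(3)[OF conjunct1[OF a]]])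
        then show ?thesis using P a True vd
          by (auto simp: joinpaths_def F_def inner_add_right)
      next
        case False
        then have F: "s > 1/2" using h12[OF s] by auto
        note a = a2[OF F s]
        have "2 * s - 1 \<notin> N2" using elim by simp
        then have P: "snd (g2 (2 * s - 1)) \<bullet> vector_derivative (\<lambda>t. fst (g2 t)) (at (2 * s - 1)) = 0"
          using subsetNE[OF N2(1)] a by auto
        have "vector_derivative (\<lambda>t. fst (g2 t)) (at (2 * s - 1)) = fst (F2 (2 * s - 1))"
          by (rule vector_derivative_at)
             (rule bounded_linear.has_vector_derivative[OF bounded_linear_fst S2(3)[OF conjunct1[OF a]]])
        then show ?thesis using P a F vd
          by (auto simp: joinpaths_def F_def inner_add_right)
      qed
    qed
  qed
  then show "horizontal_curve (g1 +++ g2) p r"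
    unfolding horizontal_curve_def using pcj cos ends by auto
qed

lemma int_bound:
  fixes F :: "real \<Rightarrow> 'b::euclidean_space" and phi :: "real \<Rightarrow> real"
  assumes F: "F \<in> borel_measurable borel" "\<And>s. s \<notin> {0..1} \<Longrightarrow> F s = 0"
    and L: "(\<integral>\<^sup>+ s. ennreal (norm (F s)) \<partial>lborel) \<le> ennreal r" and r: "0 \<le> r"
    and phi: "(phi has_integral I) {0..1}"
    and E: "negligible E"
    and b: "\<And>s. s \<in> {0..1} - E \<Longrightarrow> \<bar>phi s\<bar> \<le> K * norm (F s)" and K: "K \<ge> 0"
  shows "\<bar>I\<bar> \<le> K * r"
proof -
  have "(\<integral>\<^sup>+ s. ennreal (norm (F s)) \<partial>lborel) < top" using L by (simp add: order_le_less_trans)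
  then obtain r' where r': "(\<integral>\<^sup>+ s. ennreal (norm (F s)) \<partial>lborel) = ennreal r'" "0 \<le> r'"
    by (auto simp: less_top_ennreal)
  have rr: "r' \<le> r" using L r' r by simp
  have G: "((\<lambda>s. norm (F s)) has_integral r') UNIV"
    by (rule nn_integral_has_integral) (use F r' in auto)
  have "((\<lambda>s. if s \<in> {0..1} then norm (F s) else 0) has_integral r') UNIV"
    using G by (rule has_integral_eq[rotated]) (use F in auto)
  then have G1: "((\<lambda>s. norm (F s)) has_integral r') {0..1}"
    by (simp only: has_integral_restrict_UNIV)
  then have KG: "((\<lambda>s. K * norm (F s)) has_integral K * r') {0..1}"
    by (rule has_integral_mult_right)
  define phi' where "phi' s = (if s \<in> E then 0 else phi s)" for s
  have p': "(phi' has_integral I) {0..1}"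
    by (rule has_integral_spike[OF E _ phi]) (auto simp: phi'_def)
  have mp': "((\<lambda>s. - phi' s) has_integral - I) {0..1}"
    using has_integral_neg[OF p'] by simp
  have le1: "I \<le> K * r'"
    by (rule has_integral_le[OF p' KG]) (use b K in \<open>auto simp: phi'_def abs_le_iff\<close>)
  have le2: "- I \<le> K * r'"
    by (rule has_integral_le[OF mp' KG]) (use b K in \<open>auto simp: phi'_def abs_le_iff\<close>)
  have "K * r' \<le> K * r" using rr K by (rule mult_left_mono)
  then show ?thesis using le1 le2 by auto
qed

lemma hc_bound:
  fixes g :: "real \<Rightarrow> 'a::euclidean_space \<times> 'a"
  assumes h: "horizontal_curve g (x, \<omega>) (y, \<nu>)" and L: "curve_length g \<le> ennreal r" and r: "0 \<le> r"
  shows "norm (y - x) \<le> r" "norm (\<nu> - \<omega>) \<le> r" "\<bar>(y - x) \<bullet> \<omega>\<bar> \<le> r^2"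
proof -
  have pc: "g piecewise_C1_differentiable_on {0..1}" and g0: "g 0 = (x, \<omega>)" and g1: "g 1 = (y, \<nu>)"
    and hor: "AE s in lborel. s \<in> {0..1} \<longrightarrow> snd (g s) \<bullet> vector_derivative (\<lambda>t. fst (g t)) (at s) = 0"
    using h by (auto simp: horizontal_curve_def)
  have cont: "continuous_on {0..1} g" using pc by (auto simp: piecewise_C1_differentiable_on_def)
  obtain S F where S: "finite S" "F \<in> borel_measurable borel"
    "\<And>s. s \<in> {0<..<1} - S \<Longrightarrow> (g has_vector_derivative F s) (at s)"
    "\<And>s. s \<notin> {0<..<1} - S \<Longrightarrow> F s = 0"
    using pc1_borel[OF pc] by blast
  have F0: "\<And>s. s \<notin> {0..1} \<Longrightarrow> F s = 0" using S(4) by auto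
  have cl: "curve_length g = (\<integral>\<^sup>+ s. ennreal (norm (F s)) \<partial>lborel)"
    by (rule curve_length_F[OF S(1) S(3) F0])
  have LF: "(\<integral>\<^sup>+ s. ennreal (norm (F s)) \<partial>lborel) \<le> ennreal r" using L cl by simp
  have ftc: "(F has_integral (g t - g 0)) {0..t}" if t: "t \<in> {0..1}" for t
    by (rule fundamental_theorem_of_calculus_interior_strong[OF S(1)])
       (use t in \<open>auto intro!: S(3) continuous_on_subset[OF cont]\<close>)
  have main1: "norm (g t - g 0) \<le> r" if t: "t \<in> {0..1}" for t
  proof (cases "g t - g 0 = 0")
    case True then show ?thesis using r by simp
  next
    case False
    define w where "w = g t - g 0"
    define u where "u = w /\<^sub>R norm w"
    have nu: "norm u = 1" using False by (simp add: u_def w_def)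
    have "((\<lambda>s. u \<bullet> F s) has_integral u \<bullet> w) {0..t}"
      using has_integral_linear[OF ftc[OF t] bounded_linear_inner_right[of u]] by (simp add: o_def w_def)
    then have pi: "((\<lambda>s. if s \<in> {0..t} then u \<bullet> F s else 0) has_integral u \<bullet> w) {0..1}"
      using t by (subst has_integral_restrict) auto
    have b1: "\<bar>if s \<in> {0..t} then u \<bullet> F s else 0\<bar> \<le> 1 * norm (F s)" for s
      using Cauchy_Schwarz_ineq2[of u "F s"] nu by auto
    have "\<bar>u \<bullet> w\<bar> \<le> 1 * r"
      by (rule int_bound[OF S(2) F0 LF r pi negligible_empty b1 zero_le_one])
    moreover have "u \<bullet> w = norm w" using False
      by (simp add: u_def w_def inner_commute dot_square_norm power2_eq_square)
    ultimately show ?thesis by (simp add: w_def)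
  qed
  have "norm (g 1 - g 0) \<le> r" using main1[of 1] by simp
  then show "norm (y - x) \<le> r" "norm (\<nu> - \<omega>) \<le> r"
    using norm_fst_le[of "y - x" "\<nu> - \<omega>"] norm_snd_le[of "\<nu> - \<omega>" "y - x"] g0 g1 by auto
  obtain N where N: "{s \<in> space lborel. \<not> (s \<in> {0..1} \<longrightarrow> snd (g s) \<bullet> vector_derivative (\<lambda>t. fst (g t)) (at s) = 0)} \<subseteq> N"
     "N \<in> null_sets lborel"
    using hor by (auto elim!: AE_E simp: null_sets_def)
  define E where "E = N \<union> S \<union> {0,1}"
  have nE: "negligible E"
  proof -
    have "negligible N" using N(2) unfolding negligible_iff_null_sets by (rule null_sets_completionI)
    then show ?thesis unfolding E_def using S(1) by (intro negligible_Un) auto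
  qed
  have bl: "bounded_linear (\<lambda>v::'a\<times>'a. \<omega> \<bullet> fst v)"
    by (rule bounded_linear_compose[OF bounded_linear_inner_right bounded_linear_fst])
  have pi2: "((\<lambda>s. \<omega> \<bullet> fst (F s)) has_integral \<omega> \<bullet> (y - x)) {0..1}"
    using has_integral_linear[OF ftc[of 1] bl] g0 g1 by (simp add: o_def)
  have "\<bar>\<omega> \<bullet> (y - x)\<bar> \<le> r * r"
  proof (rule int_bound[OF S(2) F0 LF r pi2 nE _ r])
    fix s assume s: "s \<in> {0..1} - E"
    then have s': "s \<in> {0<..<1} - S" "s \<notin> N" by (auto simp: E_def)
    have vd: "vector_derivative (\<lambda>t. fst (g t)) (at s) = fst (F s)"
      by (rule vector_derivative_at) (rule bounded_linear.has_vector_derivative[OF bounded_linear_fst S(3)[OF s'(1)]])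
    have "snd (g s) \<bullet> fst (F s) = 0" using subsetNE[OF N(1) s'(2)] s vd by auto
    then have eq: "\<omega> \<bullet> fst (F s) = (\<omega> - snd (g s)) \<bullet> fst (F s)" by (simp add: inner_diff_left)
    have "norm (g s - g 0) \<le> r" using main1 s by auto
    then have n1: "norm (\<omega> - snd (g s)) \<le> r"
    proof -
      have "g s - g 0 = (fst (g s) - x, snd (g s) - \<omega>)" using g0 by (simp add: prod_eq_iff)
      then show ?thesis using norm_snd_le[of "snd (g s) - \<omega>" "fst (g s) - x"] \<open>norm (g s - g 0) \<le> r\<close>
        by (simp add: norm_minus_commute)
    qed
    have "\<bar>\<omega> \<bullet> fst (F s)\<bar> \<le> norm (\<omega> - snd (g s)) * norm (fst (F s))"
      unfolding eq by (rule Cauchy_Schwarz_ineq2)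
    also have "\<dots> \<le> r * norm (F s)"
      by (intro mult_mono n1) (auto simp: r norm_fst_le[of "fst (F s)" "snd (F s)", simplified])
    finally show "\<bar>\<omega> \<bullet> fst (F s)\<bar> \<le> r * norm (F s)" .
  qed
  then show "\<bar>(y - x) \<bullet> \<omega>\<bar> \<le> r^2" by (simp add: inner_commute power2_eq_square)
qed

definition reach :: "('a::euclidean_space \<times> 'a) \<Rightarrow> ('a \<times> 'a) \<Rightarrow> real \<Rightarrow> bool" where
  "reach p q L \<longleftrightarrow> (\<exists>g. horizontal_curve g p q \<and> curve_length g \<le> ennreal L)"

lemma reach_trans:
  assumes "reach p q L1" "reach q r L2" "0 \<le> L1" "0 \<le> L2"
  shows "reach p r (L1 + L2)"
proof -
  obtain g1 where g1: "horizontal_curve g1 p q" "curve_length g1 \<le> ennreal L1" using assms(1) by (auto simp: reach_def)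
  obtain g2 where g2: "horizontal_curve g2 q r" "curve_length g2 \<le> ennreal L2" using assms(2) by (auto simp: reach_def)
  have "curve_length (g1 +++ g2) \<le> curve_length g1 + curve_length g2" by (rule hc_join(2)[OF g1(1) g2(1)])
  also have "\<dots> \<le> ennreal L1 + ennreal L2" by (intro add_mono g1(2) g2(2))
  also have "\<dots> = ennreal (L1 + L2)" using assms by (simp add: ennreal_plus)
  finally show ?thesis unfolding reach_def using hc_join(1)[OF g1(1) g2(1)] by blast
qed

lemma reach_mono: "reach p q L \<Longrightarrow> L \<le> L' \<Longrightarrow> reach p q L'"
  unfolding reach_def by (meson ennreal_leI order.trans)

lemma reach_seg:
  fixes x v xi :: "'a::euclidean_space"
  assumes "norm xi = 1" "v \<bullet> xi = 0"
  shows "reach (x, xi) (x + v, xi) (norm v)"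
  unfolding reach_def using hc_seg[OF assms] by blast

lemma reach_refl:
  fixes x xi :: "'a::euclidean_space"
  assumes "norm xi = 1"
  shows "reach (x, xi) (x, xi) 0"
  using reach_seg[OF assms, of 0 x] by simp

lemma reach_arc:
  fixes x a w :: "'a::euclidean_space"
  assumes "norm a = 1" "norm w = 1" "a \<bullet> w = 0"
  shows "reach (x, cos \<alpha> *\<^sub>R a + sin \<alpha> *\<^sub>R w) (x, cos (\<alpha>+\<beta>) *\<^sub>R a + sin (\<alpha>+\<beta>) *\<^sub>R w) \<bar>\<beta>\<bar>"
  unfolding reach_def using hc_arc[OF assms] by blast

lemma sin_half:
  fixes z :: real assumes "0 \<le> z" "z \<le> 1" shows "z/2 \<le> sin z"
proof -
  have "(\<lambda>z. sin z - z/2) 0 \<le> (\<lambda>z. sin z - z/2) z"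
  proof (rule DERIV_nonneg_imp_nondecreasing[OF assms(1)])
    fix x assume x: "0 \<le> x" "x \<le> z"
    have "cos (pi/3) \<le> cos x"
      using x assms pi_gt3 by (subst cos_mono_le_eq) auto
    then have "1/2 \<le> cos x" by (simp add: cos_60)
    then show "\<exists>y. ((\<lambda>z. sin z - z/2) has_real_derivative y) (at x) \<and> 0 \<le> y"
      by (intro exI[of _ "cos x - 1/2"]) (auto intro!: derivative_eq_intros)
  qed
  then show ?thesis by simp
qed

lemma exists_orth:
  fixes d :: "'a::euclidean_space"
  assumes "DIM('a) \<ge> 2"
  shows "\<exists>w. norm w = 1 \<and> w \<bullet> d = 0"
proof -
  obtain b1 :: 'a where b1: "b1 \<in> Basis" using nonempty_Basis by blast
  have "card ((Basis::'a set) - {b1}) \<ge> 1" using assms b1 by (simp add: card_Diff_singleton)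
  then obtain b2 where b2: "b2 \<in> Basis" "b2 \<noteq> b1"
    by (metis Diff_iff card_0_eq empty_iff finite_Basis finite_Diff insert_iff not_one_le_zero ex_in_conv)
  define v where "v = (d \<bullet> b2) *\<^sub>R b1 - (d \<bullet> b1) *\<^sub>R b2"
  have "v \<bullet> d = (d \<bullet> b2) * (b1 \<bullet> d) - (d \<bullet> b1) * (b2 \<bullet> d)" by (simp add: v_def inner_diff_left)
  also have "\<dots> = 0" by (simp add: inner_commute)
  finally have vd: "v \<bullet> d = 0" .
  show ?thesis
  proof (cases "v = 0")
    case False
    then show ?thesis using vd by (intro exI[of _ "v /\<^sub>R norm v"]) auto
  next
    case True
    then have "v \<bullet> b2 = 0" by simp
    then have "d \<bullet> b1 = 0" using b1 b2 by (simp add: v_def inner_diff_left inner_Basis)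
    then show ?thesis using b1 by (intro exI[of _ b1]) (auto simp: inner_commute)
  qed
qed

lemma reach_vert:
  fixes x \<omega> u :: "'a::euclidean_space"
  assumes w: "norm \<omega> = 1" "norm u = 1" "\<omega> \<bullet> u = 0" and h: "\<bar>h\<bar> \<le> 1"
  shows "reach (x, \<omega>) (x + h *\<^sub>R \<omega>, \<omega>) (6 * sqrt \<bar>h\<bar>)"
proof (cases "h = 0")
  case True then show ?thesis using reach_refl[OF w(1)] by simp
next
  case False
  define z where "z = sqrt \<bar>h\<bar>"
  have z: "0 < z" "z \<le> 1" using False h by (auto simp: z_def)
  have zz: "z * z = \<bar>h\<bar>" by (simp add: z_def)
  have sz: "z/2 \<le> sin z" using sin_half z by auto
  have sz0: "0 < sin z" using sz z by linarith
  define sg where "sg = (if h > 0 then -1 else (1::real))"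
  define \<theta> where "\<theta> = sg * z"
  define t where "t = \<bar>h\<bar> / sin z"
  have t0: "0 \<le> t" using sz0 by (simp add: t_def)
  have tz: "t \<le> 2 * z"
  proof -
    have "t = z * z / sin z" by (simp add: t_def zz)
    also have "\<dots> \<le> z * z / (z/2)" using sz z by (intro divide_left_mono) auto
    also have "\<dots> = 2 * z" using z by (simp add: field_simps)
    finally show ?thesis .
  qed
  have sth: "sin \<theta> = sg * sin z" by (auto simp: \<theta>_def sg_def)
  have cth: "cos \<theta> = cos z" by (auto simp: \<theta>_def sg_def)
  have ath: "\<bar>\<theta>\<bar> = z" using z by (auto simp: \<theta>_def sg_def)
  define \<omega>' where "\<omega>' = cos \<theta> *\<^sub>R \<omega> + sin \<theta> *\<^sub>R u"
  have wu: "u \<bullet> \<omega> = 0" using w by (simp add: inner_commute)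
  have nw': "norm \<omega>' = 1" using unit_cs[OF w(1) w(2) w(3)] by (simp add: \<omega>'_def)
  define v where "v = t *\<^sub>R (cos \<theta> *\<^sub>R u - sin \<theta> *\<^sub>R \<omega>)"
  have vw': "v \<bullet> \<omega>' = 0"
    using w wu by (simp add: v_def \<omega>'_def inner_diff_left inner_add_right algebra_simps dot_square_norm)
  have nv: "norm v = t"
  proof -
    have "norm (cos \<theta> *\<^sub>R u + (- sin \<theta>) *\<^sub>R \<omega>) = sqrt ((cos \<theta>)^2 + (- sin \<theta>)^2)"
      by (rule unit_cs[OF w(2) w(1) wu])
    then have "norm (cos \<theta> *\<^sub>R u - sin \<theta> *\<^sub>R \<omega>) = 1" by simp
    then show ?thesis using t0 by (simp add: v_def)
  qed
  define x1 where "x1 = x + v"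
  define v2 where "v2 = - (t * cos \<theta>) *\<^sub>R u"
  have v2w: "v2 \<bullet> \<omega> = 0" using wu by (simp add: v2_def)
  have nv2: "norm v2 \<le> t" using w t0 by (simp add: v2_def abs_mult mult_left_le)
  have r1: "reach (x, \<omega>) (x, \<omega>') z"
    using reach_arc[OF w(1) w(2) w(3), of x 0 \<theta>] ath by (simp add: \<omega>'_def)
  have r2: "reach (x, \<omega>') (x1, \<omega>') t"
    using reach_seg[OF nw' vw', of x] nv by (simp add: x1_def)
  have r3: "reach (x1, \<omega>') (x1, \<omega>) z"
    using reach_arc[OF w(1) w(2) w(3), of x1 \<theta> "-\<theta>"] ath by (simp add: \<omega>'_def)
  have r4: "reach (x1, \<omega>) (x1 + v2, \<omega>) t"
    using reach_mono[OF reach_seg[OF w(1) v2w, of x1] nv2] .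
  have e: "x1 + v2 = x + h *\<^sub>R \<omega>"
  proof -
    have "x1 + v2 = x - (t * sin \<theta>) *\<^sub>R \<omega>" by (simp add: x1_def v_def v2_def algebra_simps)
    also have "t * sin \<theta> = - h" using sz0 False by (auto simp: t_def sth sg_def)
    finally show ?thesis by simp
  qed
  have "reach (x, \<omega>) (x + h *\<^sub>R \<omega>, \<omega>) (z + t + z + t)"
    using reach_trans[OF reach_trans[OF reach_trans[OF r1 r2] r3] r4] z t0 e by simp
  then show ?thesis by (rule reach_mono) (use tz in \<open>simp add: z_def[symmetric]\<close>)
qed

lemma polar_decomp:
  fixes \<omega> \<nu> :: "'a::euclidean_space"
  assumes d: "DIM('a) \<ge> 2" and w: "norm \<omega> = 1" "norm \<nu> = 1"
  obtains \<phi> w where "norm w = 1" "\<omega> \<bullet> w = 0" "\<nu> = cos \<phi> *\<^sub>R \<omega> + sin \<phi> *\<^sub>R w" "0 \<le> \<phi>" "\<phi> \<le> pi"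
    "\<nu> \<bullet> \<omega> \<ge> 0 \<Longrightarrow> norm (\<nu> - (\<nu> \<bullet> \<omega>) *\<^sub>R \<omega>) \<le> 1/2 \<Longrightarrow> \<phi> \<le> 2 * norm (\<nu> - (\<nu> \<bullet> \<omega>) *\<^sub>R \<omega>)"
proof -
  define c where "c = \<nu> \<bullet> \<omega>"
  define q where "q = \<nu> - c *\<^sub>R \<omega>"
  have ww: "\<omega> \<bullet> \<omega> = 1" "\<nu> \<bullet> \<nu> = 1" using w by (simp_all add: dot_square_norm)
  have c1: "\<bar>c\<bar> \<le> 1" using Cauchy_Schwarz_ineq2[of \<nu> \<omega>] w by (simp add: c_def)
  have qw: "q \<bullet> \<omega> = 0" using ww by (simp add: q_def c_def inner_diff_left)
  have nq: "(norm q)^2 = 1 - c^2"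
  proof -
    have "(norm q)^2 = q \<bullet> q" by (simp add: dot_square_norm)
    also have "\<dots> = \<nu> \<bullet> \<nu> - 2 * c * (\<nu> \<bullet> \<omega>) + c^2 * (\<omega> \<bullet> \<omega>)"
      by (simp add: q_def inner_diff_left inner_diff_right inner_commute power2_eq_square algebra_simps)
    also have "\<dots> = 1 - c^2" using ww by (simp add: c_def power2_eq_square)
    finally show ?thesis .
  qed
  obtain u where u: "norm u = 1" "u \<bullet> \<omega> = 0" using exists_orth[OF d] by blast
  show ?thesis
  proof (cases "q = 0")
    case True
    then have "c^2 = 1" using nq by simp
    then have "c = 1 \<or> c = -1" by (simp add: power2_eq_1_iff)
    then show ?thesis
    proof
      assume c: "c = 1"
      then have "\<nu> = \<omega>" using True by (simp add: q_def)
      then show ?thesis using u by (intro that[of u 0]) (auto simp: inner_commute)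
    next
      assume c: "c = -1"
      then have "\<nu> + \<omega> = 0" using True by (simp add: q_def)
      then have "\<nu> = - \<omega>" by (simp add: eq_neg_iff_add_eq_0)
      then show ?thesis using u c by (intro that[of u pi]) (auto simp: inner_commute c_def)
    qed
  next
    case False
    define \<phi> where "\<phi> = arccos c"
    have cp: "cos \<phi> = c" using c1 by (simp add: \<phi>_def)
    have sp: "sin \<phi> = norm q"
    proof -
      have "sin \<phi> = sqrt (1 - c^2)" using c1 by (simp add: \<phi>_def sin_arccos_abs)
      also have "\<dots> = norm q" using nq by (metis norm_ge_zero real_sqrt_abs real_sqrt_unique abs_of_nonneg)
      finally show ?thesis .
    qed
    have pb: "0 \<le> \<phi>" "\<phi> \<le> pi" using c1 arccos_bounded[of c] by (auto simp: \<phi>_def)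
    have nu: "\<nu> = cos \<phi> *\<^sub>R \<omega> + sin \<phi> *\<^sub>R (q /\<^sub>R norm q)"
      using False by (simp add: cp sp q_def)
    show ?thesis
    proof (rule that[of "q /\<^sub>R norm q" \<phi>])
      show "norm (q /\<^sub>R norm q) = 1" using False by simp
      show "\<omega> \<bullet> (q /\<^sub>R norm q) = 0" using qw by (simp add: inner_commute)
      assume c0: "\<nu> \<bullet> \<omega> \<ge> 0" and qh: "norm (\<nu> - (\<nu> \<bullet> \<omega>) *\<^sub>R \<omega>) \<le> 1/2"
      have "\<phi> \<le> pi/2" unfolding \<phi>_def by (rule arccos_le_pi2) (use c0 c1 in \<open>auto simp: c_def\<close>)
      have p1: "\<phi> \<le> 1"
      proof (rule ccontr)
        assume "\<not> \<phi> \<le> 1"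
        then have "sin 1 < sin \<phi>" using \<open>\<phi> \<le> pi/2\<close> pi_gt3 by (subst sin_mono_less_eq) auto
        moreover have "1/2 \<le> sin (1::real)" using sin_half[of 1] by simp
        ultimately show False using qh sp by (simp add: q_def c_def)
      qed
      have "\<phi>/2 \<le> sin \<phi>" using sin_half[OF pb(1) p1] .
      then show "\<phi> \<le> 2 * norm (\<nu> - (\<nu> \<bullet> \<omega>) *\<^sub>R \<omega>)" using sp by (simp add: q_def c_def)
    qed (use nu pb in auto)
  qed
qed

lemma reach_turn:
  fixes x \<omega> \<nu> :: "'a::euclidean_space"
  assumes d: "DIM('a) \<ge> 2" and w: "norm \<omega> = 1" "norm \<nu> = 1"
  shows "reach (x, \<omega>) (x, \<nu>) pi"
    "\<nu> \<bullet> \<omega> \<ge> 0 \<Longrightarrow> norm (\<nu> - (\<nu> \<bullet> \<omega>) *\<^sub>R \<omega>) \<le> 1/2 \<Longrightarrow> reach (x, \<omega>) (x, \<nu>) (2 * norm (\<nu> - (\<nu> \<bullet> \<omega>) *\<^sub>R \<omega>))"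
proof -
  obtain \<phi> w where p: "norm w = 1" "\<omega> \<bullet> w = 0" "\<nu> = cos \<phi> *\<^sub>R \<omega> + sin \<phi> *\<^sub>R w" "0 \<le> \<phi>" "\<phi> \<le> pi"
    "\<nu> \<bullet> \<omega> \<ge> 0 \<Longrightarrow> norm (\<nu> - (\<nu> \<bullet> \<omega>) *\<^sub>R \<omega>) \<le> 1/2 \<Longrightarrow> \<phi> \<le> 2 * norm (\<nu> - (\<nu> \<bullet> \<omega>) *\<^sub>R \<omega>)"
    using polar_decomp[OF d w] by blast
  have r: "reach (x, \<omega>) (x, \<nu>) \<phi>"
    using reach_arc[OF w(1) p(1) p(2), of x 0 \<phi>] p(3,4) by simp
  show "reach (x, \<omega>) (x, \<nu>) pi" using reach_mono[OF r p(5)] .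
  show "\<nu> \<bullet> \<omega> \<ge> 0 \<Longrightarrow> norm (\<nu> - (\<nu> \<bullet> \<omega>) *\<^sub>R \<omega>) \<le> 1/2 \<Longrightarrow> reach (x, \<omega>) (x, \<nu>) (2 * norm (\<nu> - (\<nu> \<bullet> \<omega>) *\<^sub>R \<omega>))"
    using reach_mono[OF r] p(6) by blast
qed

lemma reach_small:
  fixes x y \<omega> \<nu> :: "'a::euclidean_space"
  assumes d: "DIM('a) \<ge> 2" and w: "norm \<omega> = 1" "norm \<nu> = 1" and \<delta>: "0 < \<delta>" "\<delta> \<le> 1/2"
    and h: "\<bar>(y - x) \<bullet> \<omega>\<bar> < \<delta>^2" and p: "norm ((y - x) - ((y - x) \<bullet> \<omega>) *\<^sub>R \<omega>) < \<delta>"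
    and c: "\<nu> \<bullet> \<omega> \<ge> 0" and q: "norm (\<nu> - (\<nu> \<bullet> \<omega>) *\<^sub>R \<omega>) < \<delta>"
  shows "reach (x, \<omega>) (y, \<nu>) (9 * \<delta>)"
proof -
  define h where "h = (y - x) \<bullet> \<omega>"
  define p where "p = (y - x) - h *\<^sub>R \<omega>"
  obtain u where u: "norm u = 1" "u \<bullet> \<omega> = 0" using exists_orth[OF d] by blast
  have "\<delta>^2 \<le> 1" using \<delta> by (intro power_le_one) auto
  then have h1: "\<bar>h\<bar> \<le> 1" using h unfolding h_def by linarith
  have r1: "reach (x, \<omega>) (x + h *\<^sub>R \<omega>, \<omega>) (6 * sqrt \<bar>h\<bar>)"
    by (rule reach_vert[OF w(1) u(1) _ h1]) (use u in \<open>simp add: inner_commute\<close>)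
  have sh: "sqrt \<bar>h\<bar> \<le> \<delta>"
  proof -
    have "sqrt \<bar>h\<bar> \<le> sqrt (\<delta>^2)" using h by (intro real_sqrt_le_mono) (simp add: h_def)
    then show ?thesis using \<delta> by simp
  qed
  have pw: "p \<bullet> \<omega> = 0" using w by (simp add: p_def h_def inner_diff_left dot_square_norm)
  have r2: "reach (x + h *\<^sub>R \<omega>, \<omega>) (y, \<omega>) (norm p)"
    using reach_seg[OF w(1) pw, of "x + h *\<^sub>R \<omega>"] by (simp add: p_def)
  have r3: "reach (y, \<omega>) (y, \<nu>) (2 * norm (\<nu> - (\<nu> \<bullet> \<omega>) *\<^sub>R \<omega>))"
    using reach_turn(2)[OF d w, of y] c q \<delta> by simp
  have "reach (x, \<omega>) (y, \<nu>) (6 * sqrt \<bar>h\<bar> + norm p + 2 * norm (\<nu> - (\<nu> \<bullet> \<omega>) *\<^sub>R \<omega>))"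
    by (rule reach_trans[OF reach_trans[OF r1 r2] r3]) auto
  then show ?thesis by (rule reach_mono) (use sh p q in \<open>auto simp: p_def h_def\<close>)
qed

lemma reach_large:
  fixes x y \<omega> \<nu> :: "'a::euclidean_space"
  assumes d: "DIM('a) \<ge> 2" and w: "norm \<omega> = 1" "norm \<nu> = 1"
  shows "reach (x, \<omega>) (y, \<nu>) (norm (y - x) + 2 * pi)"
proof -
  obtain w' where w': "norm w' = 1" "w' \<bullet> (y - x) = 0" using exists_orth[OF d] by blast
  have r1: "reach (x, \<omega>) (x, w') pi" by (rule reach_turn(1)[OF d w(1) w'(1)])
  have r2: "reach (x, w') (y, w') (norm (y - x))"
    using reach_seg[OF w'(1), of "y - x" x] w'(2) by (simp add: inner_commute)
  have r3: "reach (y, w') (y, \<nu>) pi" by (rule reach_turn(1)[OF d w'(1) w(2)])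
  have "reach (x, \<omega>) (y, \<nu>) (pi + norm (y - x) + pi)"
    by (rule reach_trans[OF reach_trans[OF r1 r2] r3]) auto
  then show ?thesis by (rule reach_mono) simp
qed

lemma ball_iff: "q \<in> sR_ball p \<tau> \<longleftrightarrow> (\<exists>g. horizontal_curve g p q \<and> curve_length g < ennreal \<tau>)"
  by (simp add: sR_ball_def sR_dist_def INF_less_iff)

lemma reach_ball:
  assumes "reach p q L" "0 \<le> L" "L < \<tau>" shows "q \<in> sR_ball p \<tau>"
proof -
  obtain g where g: "horizontal_curve g p q" "curve_length g \<le> ennreal L" using assms(1) by (auto simp: reach_def)
  have "ennreal L < ennreal \<tau>" using assms by (intro ennreal_lessI) auto
  then show ?thesis unfolding ball_iff using g by (meson order_le_less_trans)
qed

lemma ball_reach: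
  assumes "q \<in> sR_ball p \<tau>"
  obtains L where "reach p q L" "0 \<le> L" "L < \<tau>"
proof -
  obtain g where g: "horizontal_curve g p q" "curve_length g < ennreal \<tau>" using assms ball_iff by blast
  then obtain L where L: "curve_length g = ennreal L" "0 \<le> L"
  proof (cases "curve_length g" rule: ennreal_cases)
    case (real r) then show ?thesis using that by blast
  next
    case top then show ?thesis using g(2) by simp
  qed
  have "L < \<tau>" using g(2) L by (simp add: ennreal_less_iff)
  then show ?thesis using g L by (intro that[of L]) (auto simp: reach_def)
qed

lemma ball_cosphere: "q \<in> sR_ball p \<tau> \<Longrightarrow> q \<in> cosphere"
  by (auto simp: ball_iff horizontal_curve_def)

lemma ball_upper:
  fixes x \<omega> y \<nu> :: "'a::euclidean_space"
  assumes "(y, \<nu>) \<in> sR_ball (x, \<omega>) \<tau>"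
  shows "norm \<nu> = 1" "norm (y - x) \<le> \<tau>" "norm (\<nu> - \<omega>) \<le> \<tau>" "\<bar>(y - x) \<bullet> \<omega>\<bar> \<le> \<tau>^2"
proof -
  show "norm \<nu> = 1" using ball_cosphere[OF assms] by (simp add: cosphere_def)
  obtain L where L: "reach (x, \<omega>) (y, \<nu>) L" "0 \<le> L" "L < \<tau>" using ball_reach[OF assms] by blast
  then obtain g where g: "horizontal_curve g (x, \<omega>) (y, \<nu>)" "curve_length g \<le> ennreal L"
    by (auto simp: reach_def)
  note b = hc_bound[OF g L(2)]
  show "norm (y - x) \<le> \<tau>" "norm (\<nu> - \<omega>) \<le> \<tau>" using b L by auto
  have "L^2 \<le> \<tau>^2" using L by (intro power_mono) auto
  then show "\<bar>(y - x) \<bullet> \<omega>\<bar> \<le> \<tau>^2" using b(3) by linarith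
qed

lemma proj_le:
  fixes v \<omega> :: "'a::euclidean_space"
  assumes "norm \<omega> = 1"
  shows "norm (v - (v \<bullet> \<omega>) *\<^sub>R \<omega>) \<le> norm v"
proof -
  have ww: "\<omega> \<bullet> \<omega> = 1" using assms by (simp add: dot_square_norm)
  have "(norm (v - (v \<bullet> \<omega>) *\<^sub>R \<omega>))^2 = (v - (v \<bullet> \<omega>) *\<^sub>R \<omega>) \<bullet> (v - (v \<bullet> \<omega>) *\<^sub>R \<omega>)"
    by (simp add: dot_square_norm)
  also have "\<dots> = v \<bullet> v - 2 * (v \<bullet> \<omega>) * (v \<bullet> \<omega>) + (v \<bullet> \<omega>)^2 * (\<omega> \<bullet> \<omega>)"
    by (simp add: inner_diff_left inner_diff_right inner_commute power2_eq_square algebra_simps)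
  also have "\<dots> = (norm v)^2 - (v \<bullet> \<omega>)^2" using ww by (simp add: dot_square_norm power2_eq_square)
  finally have "(norm (v - (v \<bullet> \<omega>) *\<^sub>R \<omega>))^2 = (norm v)^2 - (v \<bullet> \<omega>)^2" .
  then have "(norm (v - (v \<bullet> \<omega>) *\<^sub>R \<omega>))^2 \<le> (norm v)^2" by simp
  then show ?thesis by (simp add: power2_le_iff_abs_le)
qed

lemma local_reach:
  fixes y \<nu> y' \<nu>' :: "'a::euclidean_space"
  assumes d: "DIM('a) \<ge> 2" and w: "norm \<nu> = 1" "norm \<nu>' = 1" and \<delta>: "0 < \<delta>" "\<delta> \<le> 1/2"
    and c: "norm (y' - y) < \<delta>^2" "norm (\<nu>' - \<nu>) < \<delta>^2"
  shows "reach (y, \<nu>) (y', \<nu>') (9 * \<delta>)"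
proof (rule reach_small[OF d w \<delta>])
  have dd: "\<delta>^2 \<le> \<delta>" using \<delta> by (simp add: power2_eq_square mult_left_le_one_le)
  have "\<bar>(y' - y) \<bullet> \<nu>\<bar> \<le> norm (y' - y)" using Cauchy_Schwarz_ineq2[of "y' - y" \<nu>] w by simp
  then show "\<bar>(y' - y) \<bullet> \<nu>\<bar> < \<delta>^2" using c by linarith
  show "norm (y' - y - ((y' - y) \<bullet> \<nu>) *\<^sub>R \<nu>) < \<delta>"
    using proj_le[OF w(1), of "y' - y"] c dd by linarith
  have e1: "\<nu>' - (\<nu>' \<bullet> \<nu>) *\<^sub>R \<nu> = (\<nu>' - \<nu>) - ((\<nu>' - \<nu>) \<bullet> \<nu>) *\<^sub>R \<nu>"
    using w by (simp add: inner_diff_left dot_square_norm algebra_simps)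
  show "norm (\<nu>' - (\<nu>' \<bullet> \<nu>) *\<^sub>R \<nu>) < \<delta>"
    unfolding e1 using proj_le[OF w(1), of "\<nu>' - \<nu>"] c dd by linarith
  have w2: "\<nu> \<bullet> \<nu> = 1" "\<nu>' \<bullet> \<nu>' = 1" using w by (simp_all add: dot_square_norm)
  have "(norm (\<nu>' - \<nu>))^2 = (\<nu>' - \<nu>) \<bullet> (\<nu>' - \<nu>)" by (simp add: dot_square_norm)
  also have "\<dots> = 2 - 2 * (\<nu>' \<bullet> \<nu>)" using w2 by (simp add: inner_diff_left inner_diff_right inner_commute)
  finally have "(norm (\<nu>' - \<nu>))^2 = 2 - 2 * (\<nu>' \<bullet> \<nu>)" .
  moreover have "(norm (\<nu>' - \<nu>))^2 \<le> 1"
  proof -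
    have "norm (\<nu>' - \<nu>) \<le> 1" using c dd \<delta> by linarith
    then show ?thesis by (simp add: power_le_one)
  qed
  ultimately show "0 \<le> \<nu>' \<bullet> \<nu>" by linarith
qed

lemma ball_open_rel:
  fixes p :: "'a::euclidean_space \<times> 'a"
  assumes d: "DIM('a) \<ge> 2" and q: "q \<in> sR_ball p \<tau>"
  shows "\<exists>\<eta>>0. \<forall>q'\<in>cosphere. dist q q' < \<eta> \<longrightarrow> q' \<in> sR_ball p \<tau>"
proof -
  obtain L where L: "reach p q L" "0 \<le> L" "L < \<tau>" using ball_reach[OF q] by blast
  obtain y \<nu> where qq: "q = (y, \<nu>)" by fastforce
  have nu: "norm \<nu> = 1" using ball_cosphere[OF q] by (simp add: cosphere_def qq)
  define \<delta> where "\<delta> = min (1/2) ((\<tau> - L) / 18)"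
  have d18: "\<delta> \<le> (\<tau> - L) / 18" unfolding \<delta>_def by (rule min.cobounded2)
  have \<delta>: "0 < \<delta>" "\<delta> \<le> 1/2" "9 * \<delta> < \<tau> - L" using L d18 by (auto simp: \<delta>_def)
  show ?thesis
  proof (intro exI[of _ "\<delta>^2"] conjI ballI impI)
    show "0 < \<delta>^2" using \<delta> by simp
    fix q' assume q': "q' \<in> cosphere" "dist q q' < \<delta>^2"
    obtain y' \<nu>' where qq': "q' = (y', \<nu>')" by fastforce
    have nu': "norm \<nu>' = 1" using q' by (simp add: cosphere_def qq')
    have "dist y y' < \<delta>^2" "dist \<nu> \<nu>' < \<delta>^2"
      using q'(2) dist_fst_le[of q q'] dist_snd_le[of q q'] by (auto simp: qq qq')
    then have c: "norm (y' - y) < \<delta>^2" "norm (\<nu>' - \<nu>) < \<delta>^2" by (auto simp: dist_norm norm_minus_commute)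
    have "reach q q' (9 * \<delta>)" unfolding qq qq' by (rule local_reach[OF d nu nu' \<delta>(1,2) c])
    then have "reach p q' (L + 9 * \<delta>)" using reach_trans[OF L(1)] L \<delta> by auto
    then show "q' \<in> sR_ball p \<tau>" by (rule reach_ball) (use \<delta> L in auto)
  qed
qed

lemma ball_borel:
  fixes p :: "'a::euclidean_space \<times> 'a"
  assumes d: "DIM('a) \<ge> 2"
  shows "sR_ball p \<tau> \<in> sets borel"
proof -
  define B where "B = sR_ball p \<tau>"
  have ex: "\<forall>q\<in>B. \<exists>\<eta>. \<eta> > 0 \<and> (\<forall>q'\<in>cosphere. dist q q' < \<eta> \<longrightarrow> q' \<in> B)"
    using ball_open_rel[OF d] unfolding B_def by blast
  obtain \<eta> where \<eta>: "\<forall>q\<in>B. \<eta> q > 0 \<and> (\<forall>q'\<in>cosphere. dist q q' < \<eta> q \<longrightarrow> q' \<in> B)"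
    using bchoice[OF ex] by (elim exE)
  define U where "U = (\<Union>q\<in>B. ball q (\<eta> q))"
  have eq: "B = cosphere \<inter> U"
  proof
    show "B \<subseteq> cosphere \<inter> U"
    proof
      fix q assume q: "q \<in> B"
      then have "q \<in> cosphere" unfolding B_def by (rule ball_cosphere)
      moreover have "q \<in> ball q (\<eta> q)" using \<eta> q by simp
      ultimately show "q \<in> cosphere \<inter> U" using q unfolding U_def by blast
    qed
    show "cosphere \<inter> U \<subseteq> B"
    proof
      fix q' assume q': "q' \<in> cosphere \<inter> U"
      then obtain q where q: "q \<in> B" "q' \<in> ball q (\<eta> q)" unfolding U_def by blast
      then show "q' \<in> B" using \<eta> q' by (simp add: dist_commute)
    qed
  qed
  have "closed (cosphere :: ('a \<times> 'a) set)" by (simp add: cosphere_def closed_Times)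
  moreover have "open U" unfolding U_def by auto
  ultimately have "cosphere \<inter> U \<in> sets borel" by auto
  then show ?thesis using eq by (simp add: B_def)
qed

typedef (overloaded) ('a::euclidean_space) bidx = "Basis :: 'a set"
  using nonempty_Basis by blast

lemma bidx_univ: "(UNIV :: 'a::euclidean_space bidx set) = Abs_bidx ` Basis"
  by (rule type_definition.univ[OF type_definition_bidx])

instance bidx :: (euclidean_space) finite
  by standard (simp add: bidx_univ)

definition bidx_nat :: "'a::euclidean_space bidx \<Rightarrow> nat" where
  "bidx_nat = to_nat_on (UNIV :: 'a bidx set)"

lemma bidx_nat_inj: "inj bidx_nat"
  unfolding bidx_nat_def by (rule inj_on_to_nat_on) (simp add: countable_finite)

instantiation bidx :: (euclidean_space) linorder
begin
definition less_eq_bidx :: "'a bidx \<Rightarrow> 'a bidx \<Rightarrow> bool" where "less_eq_bidx x y \<longleftrightarrow> bidx_nat x \<le> bidx_nat y"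
definition less_bidx :: "'a bidx \<Rightarrow> 'a bidx \<Rightarrow> bool" where "less_bidx x y \<longleftrightarrow> bidx_nat x < bidx_nat y"
instance
  by standard (auto simp: less_eq_bidx_def less_bidx_def inj_eq[OF bidx_nat_inj])
end

instance bidx :: (euclidean_space) wellorder
proof
  fix P :: "'a bidx \<Rightarrow> bool" and a
  assume ih: "\<And>x. (\<And>y. y < x \<Longrightarrow> P y) \<Longrightarrow> P x"
  show "P a"
    by (induction a rule: measure_induct_rule[of bidx_nat]) (rule ih, auto simp: less_bidx_def)
qed

definition Phi :: "'a::euclidean_space \<Rightarrow> real^('a bidx)" where
  "Phi x = (\<chi> i. x \<bullet> Rep_bidx i)"

definition Psi :: "real^('a::euclidean_space bidx) \<Rightarrow> 'a" where
  "Psi v = (\<Sum>i\<in>UNIV. (v $ i) *\<^sub>R Rep_bidx i)"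

lemma Rep_bidx_range: "range Rep_bidx = (Basis :: 'a::euclidean_space set)"
  by (rule type_definition.Rep_range[OF type_definition_bidx])

lemma sum_bidx: "(\<Sum>i\<in>UNIV. f (Rep_bidx i)) = (\<Sum>b\<in>(Basis :: 'a::euclidean_space set). f b)"
proof -
  have "(\<Sum>b\<in>(Basis :: 'a set). f b) = (\<Sum>b\<in>range Rep_bidx. f b)" by (simp add: Rep_bidx_range)
  also have "\<dots> = (\<Sum>i\<in>UNIV. f (Rep_bidx i))"
    by (rule sum.reindex_cong[OF inj_on_inverseI[where g=Abs_bidx]]) (auto simp: Rep_bidx_inverse)
  finally show ?thesis by simp
qed

lemma prod_bidx: "(\<Prod>i\<in>UNIV. f (Rep_bidx i)) = (\<Prod>b\<in>(Basis :: 'a::euclidean_space set). f b)"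
proof -
  have "(\<Prod>b\<in>(Basis :: 'a set). f b) = (\<Prod>b\<in>range Rep_bidx. f b)" by (simp add: Rep_bidx_range)
  also have "\<dots> = (\<Prod>i\<in>UNIV. f (Rep_bidx i))"
    by (rule prod.reindex_cong[OF inj_on_inverseI[where g=Abs_bidx]]) (auto simp: Rep_bidx_inverse)
  finally show ?thesis by simp
qed

lemma Rep_bidx_inner: "Rep_bidx i \<bullet> Rep_bidx j = (if i = j then 1 else (0::real))"
  using Rep_bidx[of i] Rep_bidx[of j] by (auto simp: inner_Basis Rep_bidx_inject)

lemma Psi_Phi[simp]: "Psi (Phi x) = x"
  unfolding Psi_def Phi_def using sum_bidx[of "\<lambda>b. (x \<bullet> b) *\<^sub>R b"] by (simp add: euclidean_representation)

lemma Psi_inner: "Psi v \<bullet> Rep_bidx j = v $ j"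
proof -
  have "Psi v \<bullet> Rep_bidx j = (\<Sum>i\<in>UNIV. (v $ i) * (Rep_bidx i \<bullet> Rep_bidx j))"
    by (simp add: Psi_def inner_sum_left)
  also have "\<dots> = v $ j" by (simp add: Rep_bidx_inner if_distrib cong: if_cong)
  finally show ?thesis .
qed

lemma Phi_Psi[simp]: "Phi (Psi v) = v"
  by (simp add: Phi_def Psi_inner vec_eq_iff)

lemma linear_Phi: "linear Phi"
  by (auto simp: linear_iff Phi_def vec_eq_iff inner_add_left)

lemma linear_Psi: "linear Psi"
  by (auto simp: linear_iff Psi_def scaleR_add_left sum.distrib scaleR_sum_right)

lemma Phi_inner: "Phi x \<bullet> Phi y = x \<bullet> y"
proof -
  have "Phi x \<bullet> Phi y = (\<Sum>i\<in>UNIV. (x \<bullet> Rep_bidx i) * (y \<bullet> Rep_bidx i))"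
    by (simp add: inner_vec_def Phi_def)
  also have "\<dots> = x \<bullet> y" using sum_bidx[of "\<lambda>b. (x \<bullet> b) * (y \<bullet> b)"] by (simp add: euclidean_inner[of x y])
  finally show ?thesis .
qed

lemma Psi_inner2: "Psi v \<bullet> Psi w = v \<bullet> w"
  using Phi_inner[of "Psi v" "Psi w"] by simp

lemma Phi_meas[measurable]: "Phi \<in> borel_measurable borel"
  by (intro borel_measurable_continuous_onI linear_continuous_on linear_conv_bounded_linear[THEN iffD1] linear_Phi)

lemma Psi_meas[measurable]: "Psi \<in> borel_measurable borel"
  by (intro borel_measurable_continuous_onI linear_continuous_on linear_conv_bounded_linear[THEN iffD1] linear_Psi)

lemma Psi_pre_box: "Psi -` box l u = box (Phi l) (Phi u)"
proof -
  have "v \<in> Psi -` box l u \<longleftrightarrow> (\<forall>i. l \<bullet> Rep_bidx i < v $ i \<and> v $ i < u \<bullet> Rep_bidx i)" for v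
    by (simp add: mem_box Rep_bidx_range[symmetric] Psi_inner)
  then show ?thesis by (auto simp: mem_box_cart Phi_def)
qed

lemma Basis_real_vec: "(Basis :: (real^'n) set) = range (\<lambda>i. axis i 1)"
  by (auto simp: Basis_vec_def)

lemma lborel_Psi: "distr lborel borel (Psi :: real^('a::euclidean_space bidx) \<Rightarrow> 'a) = lborel"
proof (rule lborel_eqI[symmetric])
  fix l u :: 'a assume le: "\<And>b. b\<in>Basis \<Longrightarrow> l \<bullet> b \<le> u \<bullet> b"
  have le': "Phi l \<bullet> c \<le> Phi u \<bullet> c" if c: "c \<in> Basis" for c
  proof -
    obtain i where i: "c = axis i 1" using c by (auto simp: Basis_vec_def)
    have "l \<bullet> Rep_bidx i \<le> u \<bullet> Rep_bidx i" by (rule le) (rule Rep_bidx)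
    then show ?thesis by (simp add: i inner_axis Phi_def)
  qed
  have "emeasure (distr lborel borel (Psi :: real^('a bidx) \<Rightarrow> 'a)) (box l u) = emeasure lborel (box (Phi l) (Phi u))"
    by (simp add: emeasure_distr Psi_pre_box)
  also have "\<dots> = (\<Prod>c\<in>Basis. (Phi u - Phi l) \<bullet> c)" by (rule emeasure_lborel_box[OF le'])
  also have "\<dots> = (\<Prod>i\<in>UNIV. (Phi u - Phi l) \<bullet> axis i 1)"
    unfolding Basis_real_vec by (subst prod.reindex) (auto simp: inj_on_def axis_eq_axis)
  also have "\<dots> = (\<Prod>i\<in>UNIV. (u - l) \<bullet> Rep_bidx i)"
    by (simp add: inner_axis Phi_def inner_diff_left)
  also have "\<dots> = (\<Prod>b\<in>Basis. (u - l) \<bullet> b)" using prod_bidx[of "\<lambda>b. (u - l) \<bullet> b"] by simp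
  finally show "emeasure (distr lborel borel (Psi :: real^('a bidx) \<Rightarrow> 'a)) (box l u) = (\<Prod>b\<in>Basis. (u - l) \<bullet> b)" .
qed simp

lemma lborel_lebesgue: "S \<in> sets borel \<Longrightarrow> emeasure lborel S = emeasure lebesgue S"
  by simp

lemma lborel_orth:
  fixes H :: "'a::euclidean_space \<Rightarrow> 'a"
  assumes oH: "orthogonal_transformation H" and inv: "\<And>x. H (H x) = x"
  shows "distr lborel borel H = lborel"
proof (rule lborel_eqI[symmetric])
  have linH: "linear H" using oH by (simp add: orthogonal_transformation_def)
  have Hm[measurable]: "H \<in> borel_measurable borel"
    by (intro borel_measurable_continuous_onI linear_continuous_on linear_conv_bounded_linear[THEN iffD1] linH)
  define G where "G v = Phi (H (Psi v))" for v :: "real^('a bidx)"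
  have linG: "linear G"
    using linear_compose[OF linear_compose[OF linear_Psi linH] linear_Phi] by (simp add: o_def G_def[abs_def])
  have oG: "orthogonal_transformation G"
    unfolding orthogonal_transformation_def using linG oH
    by (simp add: G_def Phi_inner Psi_inner2 orthogonal_transformation_def)
  have Gi: "G (G v) = v" for v by (simp add: G_def inv)
  have Gm[measurable]: "G \<in> borel_measurable borel"
    by (intro borel_measurable_continuous_onI linear_continuous_on linear_conv_bounded_linear[THEN iffD1] linG)
  fix l u :: 'a assume le: "\<And>b. b\<in>Basis \<Longrightarrow> l \<bullet> b \<le> u \<bullet> b"
  define T where "T = box (Phi l) (Phi u)"
  have TB: "T \<in> sets borel" by (simp add: T_def)
  have eq1: "Psi -` (H -` box l u) = G -` T"
    by (auto simp: G_def T_def Psi_pre_box[symmetric])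
  have eq2: "G -` T = G ` T"
  proof
    show "G -` T \<subseteq> G ` T" using Gi by (metis image_eqI subsetI vimageE)
    show "G ` T \<subseteq> G -` T" using Gi by auto
  qed
  have "G -` T \<in> sets borel" using measurable_sets[OF Gm TB] by simp
  then have GTb: "G ` T \<in> sets borel" using eq2 by simp
  have GT: "G ` T \<in> lmeasurable" by (rule measurable_orthogonal_image[OF oG]) (simp add: T_def)
  have TL: "T \<in> lmeasurable" by (simp add: T_def)
  have mGT: "measure lebesgue (G ` T) = measure lebesgue T" by (rule measure_orthogonal_image[OF oG TL])
  have "emeasure lborel (G ` T) = emeasure lebesgue (G ` T)" using GTb by (rule lborel_lebesgue)
  also have "\<dots> = ennreal (measure lebesgue (G ` T))" using GT by (intro emeasure_eq_ennreal_measure fmeasurableD2)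
  also have "\<dots> = ennreal (measure lebesgue T)" by (simp add: mGT)
  also have "\<dots> = emeasure lebesgue T" using TL by (intro emeasure_eq_ennreal_measure[symmetric] fmeasurableD2)
  also have "\<dots> = emeasure lborel T" using TB by (rule lborel_lebesgue[symmetric])
  finally have eq3: "emeasure lborel (G ` T) = emeasure lborel T" .
  have HB: "H -` box l u \<in> sets borel" using measurable_sets[OF Hm, of "box l u"] by simp
  have "emeasure (distr lborel borel H) (box l u) = emeasure lborel (H -` box l u)"
    by (simp add: emeasure_distr)
  also have "\<dots> = emeasure (distr lborel borel (Psi :: real^('a bidx) \<Rightarrow> 'a)) (H -` box l u)"
    by (simp only: lborel_Psi)
  also have "\<dots> = emeasure lborel (Psi -` (H -` box l u))"
    by (subst emeasure_distr) (use HB in auto)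
  also have "\<dots> = emeasure lborel T" using eq1 eq2 eq3 by simp
  also have "\<dots> = emeasure (distr lborel borel (Psi :: real^('a bidx) \<Rightarrow> 'a)) (box l u)"
    by (simp add: emeasure_distr T_def Psi_pre_box)
  also have "\<dots> = emeasure lborel (box l u)" by (simp only: lborel_Psi)
  also have "\<dots> = (\<Prod>b\<in>Basis. (u - l) \<bullet> b)" by (rule emeasure_lborel_box[OF le])
  finally show "emeasure (distr lborel borel H) (box l u) = (\<Prod>b\<in>Basis. (u - l) \<bullet> b)" .
qed simp

lemma sets_sphere_measure[measurable_cong]: "sets (sphere_measure :: 'a::euclidean_space measure) = sets borel"
  by (simp add: sphere_measure_def)

lemma sigma_eq:
  assumes A: "A \<in> sets (borel :: 'a::euclidean_space measure)"
  shows "emeasure (sphere_measure :: 'a measure) A = ennreal (real DIM('a)) * emeasure lborel (sgn -` A \<inter> ball 0 1)"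
proof -
  have S: "sgn -` A \<in> sets (borel :: 'a measure)" using measurable_sets[OF borel_measurable_sgn A] by simp
  have [measurable]: "ball (0::'a) 1 \<in> sets borel" by simp
  have fm[measurable]: "(\<lambda>x::'a. ennreal (real DIM('a)) * indicator (ball 0 1) x) \<in> borel_measurable borel"
    by measurable
  have "emeasure (sphere_measure :: 'a measure) A =
    emeasure (density lborel (\<lambda>x::'a. ennreal (real DIM('a)) * indicator (ball 0 1) x)) (sgn -` A)"
    unfolding sphere_measure_def using A by (subst emeasure_distr) auto
  also have "\<dots> = (\<integral>\<^sup>+ x. ennreal (real DIM('a)) * indicator (sgn -` A \<inter> ball 0 1) x \<partial>lborel)"
    using S by (subst emeasure_density) (auto intro!: nn_integral_cong split: split_indicator simp: borel_measurable_indicator_iff)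
  also have "\<dots> = ennreal (real DIM('a)) * emeasure lborel (sgn -` A \<inter> ball 0 1)"
    using S by (subst nn_integral_cmult_indicator) auto
  finally show ?thesis .
qed

lemma sphere_finite: "finite_measure (sphere_measure :: 'a::euclidean_space measure)"
proof (rule finite_measureI)
  have "emeasure (sphere_measure :: 'a measure) (space sphere_measure) =
      ennreal (real DIM('a)) * emeasure lborel (sgn -` UNIV \<inter> ball (0::'a) 1)"
    using sigma_eq[of UNIV] by (simp add: sphere_measure_def)
  also have "\<dots> < top" using emeasure_lborel_ball_finite[of "0::'a" 1] by (simp add: ennreal_mult_less_top)
  finally show "emeasure (sphere_measure :: 'a measure) (space sphere_measure) \<noteq> \<infinity>" by simp
qed

lemma vol_Times:
  fixes Y C :: "'a::euclidean_space set"
  assumes "Y \<in> sets borel" "C \<in> sets borel"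
  shows "vol (Y \<times> C) = emeasure lborel Y * emeasure sphere_measure C"
proof -
  interpret finite_measure "sphere_measure :: 'a measure" by (rule sphere_finite)
  show ?thesis unfolding vol_def cosphere_measure_def
    by (rule emeasure_pair_measure_Times) (use assms in auto)
qed

lemma sets_cosphere_measure: "sets (cosphere_measure :: ('a::euclidean_space \<times> 'a) measure) = sets borel"
proof -
  have "sets (cosphere_measure :: ('a \<times> 'a) measure) = sets ((borel :: 'a measure) \<Otimes>\<^sub>M (borel :: 'a measure))"
    unfolding cosphere_measure_def by (intro sets_pair_measure_cong) (auto simp: sets_sphere_measure)
  also have "\<dots> = sets borel" by (simp only: borel_prod)
  finally show ?thesis .
qed

lemma vol_mono: "A \<subseteq> B \<Longrightarrow> B \<in> sets borel \<Longrightarrow> vol A \<le> vol B"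
  unfolding vol_def by (rule emeasure_mono) (auto simp: sets_cosphere_measure)

definition hh :: "'a::euclidean_space \<Rightarrow> 'a \<Rightarrow> 'a" where
  "hh u x = x - (2 * (x \<bullet> u) / (u \<bullet> u)) *\<^sub>R u"

lemma hh_linear: "linear (hh u)"
  by (auto simp: linear_iff hh_def inner_add_left algebra_simps add_divide_distrib scaleR_add_left)

lemma hh_inner: "hh u x \<bullet> hh u y = x \<bullet> y"
proof (cases "u = 0")
  case True then show ?thesis by (simp add: hh_def)
next
  case False
  then have uu: "u \<bullet> u \<noteq> 0" by simp
  show ?thesis using uu
    by (simp add: hh_def inner_diff_left inner_diff_right inner_commute field_simps power2_eq_square)
qed

lemma hh_orth: "orthogonal_transformation (hh u)"
  by (simp add: orthogonal_transformation_def hh_linear hh_inner)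

lemma hh_inv: "hh u (hh u x) = x"
proof (cases "u = 0")
  case True then show ?thesis by (simp add: hh_def)
next
  case False
  then have uu: "u \<bullet> u \<noteq> 0" by simp
  have "hh u x \<bullet> u = - (x \<bullet> u)" using uu by (simp add: hh_def inner_diff_left field_simps)
  then show ?thesis using uu by (simp add: hh_def algebra_simps)
qed

lemma hh_norm: "norm (hh u x) = norm x"
  using hh_inner[of u x x] by (simp add: norm_eq_sqrt_inner)

lemma hh_map:
  assumes "norm \<omega> = 1" "norm e = 1"
  shows "hh (\<omega> - e) \<omega> = e"
proof (cases "\<omega> = e")
  case True then show ?thesis by (simp add: hh_def)
next
  case False
  have ww: "\<omega> \<bullet> \<omega> = 1" "e \<bullet> e = 1" using assms by (simp_all add: dot_square_norm)
  have uu: "(\<omega> - e) \<bullet> (\<omega> - e) = 2 * (1 - \<omega> \<bullet> e)" using ww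
    by (simp add: inner_diff_left inner_diff_right inner_commute)
  have ne: "(\<omega> - e) \<bullet> (\<omega> - e) \<noteq> 0" using False by simp
  have a: "\<omega> \<bullet> (\<omega> - e) = 1 - \<omega> \<bullet> e" using ww by (simp add: inner_diff_right)
  have nz: "1 - \<omega> \<bullet> e \<noteq> 0"
  proof
    assume "1 - \<omega> \<bullet> e = 0"
    then have "(\<omega> - e) \<bullet> (\<omega> - e) = 0" using uu by simp
    with ne show False by simp
  qed
  have "2 * (\<omega> \<bullet> (\<omega> - e)) / ((\<omega> - e) \<bullet> (\<omega> - e)) = 2 * (1 - \<omega> \<bullet> e) / (2 * (1 - \<omega> \<bullet> e))"
    by (simp only: a uu)
  also have "\<dots> = 1" using nz by simp
  finally have eq: "2 * (\<omega> \<bullet> (\<omega> - e)) / ((\<omega> - e) \<bullet> (\<omega> - e)) = 1" .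
  show ?thesis unfolding hh_def eq by simp
qed

lemma hh_meas[measurable]: "hh u \<in> borel_measurable borel"
  by (intro borel_measurable_continuous_onI linear_continuous_on linear_conv_bounded_linear[THEN iffD1] hh_linear)

lemma lborel_hh: "S \<in> sets borel \<Longrightarrow> emeasure lborel (hh u -` S) = emeasure lborel S"
proof -
  assume S: "S \<in> sets borel"
  have "emeasure lborel S = emeasure (distr lborel borel (hh u)) S"
    by (simp only: lborel_orth[OF hh_orth hh_inv])
  also have "\<dots> = emeasure lborel (hh u -` S)" using S by (subst emeasure_distr) auto
  finally show ?thesis by simp
qed

lemma sgn_hh: "sgn (hh u x) = hh u (sgn x)"
  by (simp add: sgn_div_norm hh_norm linear_cmul[OF hh_linear])

lemma sigma_hh:
  assumes "A \<in> sets borel"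
  shows "emeasure sphere_measure (hh u -` A) = emeasure sphere_measure A"
proof -
  have A': "hh u -` A \<in> sets borel" using measurable_sets[OF hh_meas assms] by simp
  have eq: "sgn -` (hh u -` A) \<inter> ball 0 1 = hh u -` (sgn -` A \<inter> ball 0 1)"
    by (auto simp: sgn_hh hh_norm)
  have S: "sgn -` A \<inter> ball 0 1 \<in> sets borel" using measurable_sets[OF borel_measurable_sgn assms] by auto
  show ?thesis using sigma_eq[OF A'] sigma_eq[OF assms] eq lborel_hh[OF S] by simp
qed

lemma sum_Basis_inner:
  fixes f :: "'a::euclidean_space \<Rightarrow> real"
  assumes "b \<in> Basis"
  shows "(\<Sum>b'\<in>Basis. f b' *\<^sub>R b') \<bullet> b = f b"
proof -
  have "(\<Sum>b'\<in>Basis. f b' *\<^sub>R b') \<bullet> b = (\<Sum>b'\<in>Basis. f b' * (b' \<bullet> b))"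
    by (simp add: inner_sum_left)
  also have "\<dots> = (\<Sum>b'\<in>Basis. (if b' = b then f b' else 0))"
    using assms by (intro sum.cong) (auto simp: inner_Basis)
  also have "\<dots> = f b" using assms by (simp add: sum.delta)
  finally show ?thesis .
qed

lemma prod_Basis_if:
  assumes e: "(e::'a::euclidean_space) \<in> Basis"
  shows "(\<Prod>b\<in>Basis. if b = e then p else q) = p * q ^ (DIM('a) - 1)"
proof -
  have "(\<Prod>b\<in>Basis. if b = e then p else q) = (if e = e then p else q) * (\<Prod>b\<in>Basis - {e}. if b = e then p else q)"
    using e by (intro prod.remove) auto
  also have "(\<Prod>b\<in>Basis - {e}. if b = e then p else q) = (\<Prod>b\<in>Basis - {e}. q)" by (intro prod.cong) auto
  also have "\<dots> = q ^ (DIM('a) - 1)" using e by (simp add: card_Diff_singleton)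
  finally show ?thesis by simp
qed

definition bvec :: "'a::euclidean_space \<Rightarrow> real \<Rightarrow> real \<Rightarrow> 'a" where
  "bvec e p q = (\<Sum>b\<in>Basis. (if b = e then p else q) *\<^sub>R b)"

lemma bvec_inner: "b \<in> Basis \<Longrightarrow> bvec e p q \<bullet> b = (if b = e then p else q)"
  unfolding bvec_def by (rule sum_Basis_inner)

lemma box_measure:
  fixes e c :: "'a::euclidean_space"
  assumes e: "e \<in> Basis" and "p1 \<le> p2" "q1 \<le> q2"
  shows "emeasure lborel (box (c + bvec e p1 q1) (c + bvec e p2 q2)) = ennreal ((p2 - p1) * (q2 - q1) ^ (DIM('a) - 1))"
proof -
  have le: "\<And>b. b \<in> Basis \<Longrightarrow> (c + bvec e p1 q1) \<bullet> b \<le> (c + bvec e p2 q2) \<bullet> b"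
    using assms by (auto simp: inner_add_left bvec_inner)
  have "emeasure lborel (box (c + bvec e p1 q1) (c + bvec e p2 q2)) =
     ennreal (\<Prod>b\<in>Basis. ((c + bvec e p2 q2) - (c + bvec e p1 q1)) \<bullet> b)"
    by (subst emeasure_lborel_box[OF le]) (auto simp: prod_ennreal)
  also have "(\<Prod>b\<in>Basis. ((c + bvec e p2 q2) - (c + bvec e p1 q1)) \<bullet> b) = (\<Prod>b\<in>Basis. if b = e then p2 - p1 else q2 - q1)"
    by (intro prod.cong) (auto simp: inner_diff_left bvec_inner)
  also have "\<dots> = (p2 - p1) * (q2 - q1) ^ (DIM('a) - 1)" by (rule prod_Basis_if[OF e])
  finally show ?thesis .
qed

lemma cbox_measure:
  fixes e c :: "'a::euclidean_space"
  assumes e: "e \<in> Basis" and "p1 \<le> p2" "q1 \<le> q2"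
  shows "emeasure lborel (cbox (c + bvec e p1 q1) (c + bvec e p2 q2)) = ennreal ((p2 - p1) * (q2 - q1) ^ (DIM('a) - 1))"
proof -
  have le: "\<And>b. b \<in> Basis \<Longrightarrow> (c + bvec e p1 q1) \<bullet> b \<le> (c + bvec e p2 q2) \<bullet> b"
    using assms by (auto simp: inner_add_left bvec_inner)
  have "emeasure lborel (cbox (c + bvec e p1 q1) (c + bvec e p2 q2)) =
     ennreal (\<Prod>b\<in>Basis. ((c + bvec e p2 q2) - (c + bvec e p1 q1)) \<bullet> b)"
    by (subst emeasure_lborel_cbox[OF le]) (auto simp: prod_ennreal)
  also have "(\<Prod>b\<in>Basis. ((c + bvec e p2 q2) - (c + bvec e p1 q1)) \<bullet> b) = (\<Prod>b\<in>Basis. if b = e then p2 - p1 else q2 - q1)"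
    by (intro prod.cong) (auto simp: inner_diff_left bvec_inner)
  also have "\<dots> = (p2 - p1) * (q2 - q1) ^ (DIM('a) - 1)" by (rule prod_Basis_if[OF e])
  finally show ?thesis .
qed

lemma mem_box_bvec:
  assumes "e \<in> Basis"
  shows "z \<in> box (c + bvec e p1 q1) (c + bvec e p2 q2) \<longleftrightarrow>
     (\<forall>b\<in>Basis. (if b = e then p1 else q1) < (z - c) \<bullet> b \<and> (z - c) \<bullet> b < (if b = e then p2 else q2))"
  by (auto simp: mem_box inner_add_left bvec_inner inner_diff_left)

lemma mem_cbox_bvec:
  assumes "e \<in> Basis"
  shows "z \<in> cbox (c + bvec e p1 q1) (c + bvec e p2 q2) \<longleftrightarrow>
     (\<forall>b\<in>Basis. (if b = e then p1 else q1) \<le> (z - c) \<bullet> b \<and> (z - c) \<bullet> b \<le> (if b = e then p2 else q2))"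
  by (auto simp: mem_box inner_add_left bvec_inner inner_diff_left)

lemma lborel_aff:
  fixes K :: "'a::euclidean_space set"
  assumes K: "K \<in> sets borel"
  shows "emeasure lborel ((\<lambda>y. hh u (y - x)) -` K) = emeasure lborel K"
proof -
  have S: "hh u -` K \<in> sets borel" using measurable_sets[OF hh_meas K] by simp
  have eq: "(\<lambda>y. hh u (y - x)) -` K = ((+) (- x)) -` (hh u -` K)" by auto
  have "emeasure lborel (((+) (- x)) -` (hh u -` K)) = emeasure (distr lborel borel ((+) (- x))) (hh u -` K)"
    using S by (subst emeasure_distr) auto
  also have "\<dots> = emeasure lborel (hh u -` K)" by (simp only: lborel_distr_plus)
  also have "\<dots> = emeasure lborel K" by (rule lborel_hh[OF K])
  finally show ?thesis using eq by simp
qed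

lemma aff_meas[measurable]: "(\<lambda>y. hh u (y - x)) \<in> borel_measurable borel"
  by measurable

lemma sum_Basis_if:
  fixes p q :: real
  assumes e: "(e::'a::euclidean_space) \<in> Basis"
  shows "(\<Sum>b\<in>Basis. if b = e then p else q) = p + real (DIM('a) - 1) * q"
proof -
  have "(\<Sum>b\<in>Basis. if b = e then p else q) = (if e = e then p else q) + (\<Sum>b\<in>Basis - {e}. if b = e then p else q)"
    using e by (intro sum.remove) auto
  also have "(\<Sum>b\<in>Basis - {e}. if b = e then p else q) = (\<Sum>b\<in>Basis - {e}. q)" by (intro sum.cong) auto
  also have "\<dots> = real (DIM('a) - 1) * q" using e by (simp add: card_Diff_singleton)
  finally show ?thesis by simp
qed

context
  fixes e \<omega> :: "'a::euclidean_space"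
  assumes e: "e \<in> Basis" and w: "norm \<omega> = 1"
begin

abbreviation "H \<equiv> hh (\<omega> - e)"

lemma ne: "norm e = 1" using e by simp

lemma H_w: "H \<omega> = e" by (rule hh_map[OF w ne])

lemma H_inner_e: "H z \<bullet> e = z \<bullet> \<omega>"
  using hh_inner[of "\<omega> - e" z \<omega>] H_w by simp

lemma H_proj: "H (z - (z \<bullet> \<omega>) *\<^sub>R \<omega>) = H z - (H z \<bullet> e) *\<^sub>R e"
  by (simp add: linear_diff[OF hh_linear] linear_cmul[OF hh_linear] H_w H_inner_e)

lemma Y_up:
  assumes \<tau>: "0 \<le> \<tau>"
  shows "\<exists>Y. Y \<in> sets borel \<and> {y. norm (y - x) \<le> \<tau> \<and> \<bar>(y - x) \<bullet> \<omega>\<bar> \<le> \<tau>^2} \<subseteq> Y \<and>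
     emeasure lborel Y \<le> ennreal (2 * \<tau>^2 * (2 * \<tau>) ^ (DIM('a) - 1))"
proof -
  define K where "K = cbox (0 + bvec e (- (\<tau>^2)) (- \<tau>)) (0 + bvec e (\<tau>^2) \<tau>)"
  define Y where "Y = (\<lambda>y. H (y - x)) -` K"
  have KB: "K \<in> sets borel" by (simp add: K_def)
  have YB: "Y \<in> sets borel" unfolding Y_def using measurable_sets[OF aff_meas KB] by simp
  have "emeasure lborel Y = emeasure lborel K" unfolding Y_def by (rule lborel_aff[OF KB])
  also have "\<dots> = ennreal ((\<tau>^2 - - (\<tau>^2)) * (\<tau> - - \<tau>) ^ (DIM('a) - 1))"
    unfolding K_def using \<tau> by (intro cbox_measure[OF e]) auto
  finally have mY: "emeasure lborel Y = ennreal (2 * \<tau>^2 * (2 * \<tau>) ^ (DIM('a) - 1))" by simp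
  have sub: "{y. norm (y - x) \<le> \<tau> \<and> \<bar>(y - x) \<bullet> \<omega>\<bar> \<le> \<tau>^2} \<subseteq> Y"
  proof
    fix y assume y: "y \<in> {y. norm (y - x) \<le> \<tau> \<and> \<bar>(y - x) \<bullet> \<omega>\<bar> \<le> \<tau>^2}"
    define z where "z = H (y - x)"
    have nz: "norm z = norm (y - x)" by (simp add: z_def hh_norm)
    have "\<forall>b\<in>Basis. (if b = e then - (\<tau>^2) else - \<tau>) \<le> (z - 0) \<bullet> b \<and> (z - 0) \<bullet> b \<le> (if b = e then \<tau>^2 else \<tau>)"
    proof
      fix b :: 'a assume b: "b \<in> Basis"
      show "(if b = e then - (\<tau>^2) else - \<tau>) \<le> (z - 0) \<bullet> b \<and> (z - 0) \<bullet> b \<le> (if b = e then \<tau>^2 else \<tau>)"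
      proof (cases "b = e")
        case True then show ?thesis using y by (auto simp: z_def H_inner_e abs_le_iff)
      next
        case False
        have "\<bar>z \<bullet> b\<bar> \<le> norm z" by (rule Basis_le_norm[OF b])
        then show ?thesis using False y nz by (auto simp: abs_le_iff)
      qed
    qed
    then have "z \<in> K" unfolding K_def by (subst mem_cbox_bvec[OF e])
    then show "y \<in> Y" by (simp add: Y_def z_def)
  qed
  show ?thesis using YB sub mY by auto
qed

lemma Y_low:
  assumes \<delta>: "0 < \<delta>"
  shows "\<exists>Y. Y \<in> sets borel \<and> Y \<subseteq> {y. \<bar>(y - x) \<bullet> \<omega>\<bar> < \<delta>^2 \<and> norm ((y - x) - ((y - x) \<bullet> \<omega>) *\<^sub>R \<omega>) < \<delta>} \<and>
     emeasure lborel Y = ennreal (2 * \<delta>^2 * (2 * \<delta> / DIM('a)) ^ (DIM('a) - 1))"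
proof -
  define q where "q = \<delta> / DIM('a)"
  have q: "0 < q" using \<delta> by (simp add: q_def)
  define K where "K = box (0 + bvec e (- (\<delta>^2)) (- q)) (0 + bvec e (\<delta>^2) q)"
  define Y where "Y = (\<lambda>y. H (y - x)) -` K"
  have KB: "K \<in> sets borel" by (simp add: K_def)
  have YB: "Y \<in> sets borel" unfolding Y_def using measurable_sets[OF aff_meas KB] by simp
  have "emeasure lborel Y = emeasure lborel K" unfolding Y_def by (rule lborel_aff[OF KB])
  also have "\<dots> = ennreal ((\<delta>^2 - - (\<delta>^2)) * (q - - q) ^ (DIM('a) - 1))"
    unfolding K_def using q by (intro box_measure[OF e]) auto
  finally have mY: "emeasure lborel Y = ennreal (2 * \<delta>^2 * (2 * \<delta> / DIM('a)) ^ (DIM('a) - 1))"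
    by (simp add: q_def)
  have sub: "Y \<subseteq> {y. \<bar>(y - x) \<bullet> \<omega>\<bar> < \<delta>^2 \<and> norm ((y - x) - ((y - x) \<bullet> \<omega>) *\<^sub>R \<omega>) < \<delta>}"
  proof
    fix y assume y: "y \<in> Y"
    define z where "z = H (y - x)"
    have zK0: "z \<in> K" using y by (simp add: Y_def z_def)
    have zK: "\<forall>b\<in>Basis. (if b = e then - (\<delta>^2) else - q) < (z - 0) \<bullet> b \<and> (z - 0) \<bullet> b < (if b = e then \<delta>^2 else q)"
      using zK0 unfolding K_def mem_box_bvec[OF e] .
    have ze: "z \<bullet> e = (y - x) \<bullet> \<omega>" by (simp add: z_def H_inner_e)
    have a: "\<bar>(y - x) \<bullet> \<omega>\<bar> < \<delta>^2" using zK e by (auto simp: ze[symmetric] abs_less_iff)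
    have "norm ((y - x) - ((y - x) \<bullet> \<omega>) *\<^sub>R \<omega>) = norm (z - (z \<bullet> e) *\<^sub>R e)"
      using H_proj[of "y - x"] hh_norm[of "\<omega> - e" "(y - x) - ((y - x) \<bullet> \<omega>) *\<^sub>R \<omega>"] by (simp add: z_def)
    also have "\<dots> \<le> (\<Sum>b\<in>Basis. \<bar>(z - (z \<bullet> e) *\<^sub>R e) \<bullet> b\<bar>)" by (rule norm_le_l1)
    also have "\<dots> \<le> (\<Sum>b\<in>Basis. if b = e then 0 else q)"
    proof (rule sum_mono)
      fix b :: 'a assume b: "b \<in> Basis"
      show "\<bar>(z - (z \<bullet> e) *\<^sub>R e) \<bullet> b\<bar> \<le> (if b = e then 0 else q)"
        using zK b e by (auto simp: inner_diff_left inner_Basis abs_le_iff)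
    qed
    also have "\<dots> = real (DIM('a) - 1) * q" using sum_Basis_if[OF e, of 0 q] by simp
    also have "\<dots> < \<delta>"
    proof -
      have "real (DIM('a) - 1) < real DIM('a)" by (simp add: DIM_positive)
      then have "real (DIM('a) - 1) * q < real DIM('a) * q" using q by (intro mult_strict_right_mono) auto
      also have "real DIM('a) * q = \<delta>" by (simp add: q_def)
      finally show ?thesis by simp
    qed
    finally show "y \<in> {y. \<bar>(y - x) \<bullet> \<omega>\<bar> < \<delta>^2 \<and> norm ((y - x) - ((y - x) \<bullet> \<omega>) *\<^sub>R \<omega>) < \<delta>}"
      using a by simp
  qed
  show ?thesis using YB sub mY by auto
qed

end

lemma x_sgn: "x = norm x *\<^sub>R sgn (x::'a::real_normed_vector)"
  by (cases "x = 0") (auto simp: sgn_div_norm)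

lemma cap_low_borel:
  fixes \<omega> :: "'a::euclidean_space"
  shows "{\<nu>. \<nu> \<in> sphere 0 1 \<and> 0 < \<nu> \<bullet> \<omega> \<and> norm (\<nu> - (\<nu> \<bullet> \<omega>) *\<^sub>R \<omega>) < r} \<in> sets borel"
proof -
  have "{\<nu>::'a. \<nu> \<in> sphere 0 1 \<and> 0 < \<nu> \<bullet> \<omega> \<and> norm (\<nu> - (\<nu> \<bullet> \<omega>) *\<^sub>R \<omega>) < r} =
    sphere 0 1 \<inter> ({\<nu>. 0 < \<nu> \<bullet> \<omega>} \<inter> {\<nu>. norm (\<nu> - (\<nu> \<bullet> \<omega>) *\<^sub>R \<omega>) < r})" by auto
  moreover have "open {\<nu>::'a. 0 < \<nu> \<bullet> \<omega>}" by (intro open_Collect_less continuous_intros)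
  moreover have "open {\<nu>::'a. norm (\<nu> - (\<nu> \<bullet> \<omega>) *\<^sub>R \<omega>) < r}" by (intro open_Collect_less continuous_intros)
  ultimately show ?thesis by auto
qed

context
  fixes e \<omega> :: "'a::euclidean_space"
  assumes e: "e \<in> Basis" and w: "norm \<omega> = 1"
begin

lemma H_diff: "norm (hh (\<omega> - e) \<nu> - e) = norm (\<nu> - \<omega>)"
proof -
  have "hh (\<omega> - e) \<nu> - e = hh (\<omega> - e) (\<nu> - \<omega>)"
    using H_w[OF e w] by (simp add: linear_diff[OF hh_linear])
  then show ?thesis by (simp add: hh_norm)
qed

lemma cap_up:
  assumes r: "0 \<le> r"
  shows "emeasure sphere_measure {\<nu>. \<nu> \<in> sphere 0 1 \<and> norm (\<nu> - \<omega>) \<le> r}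
     \<le> ennreal (real DIM('a) * (2 * (2 * r) ^ (DIM('a) - 1)))"
proof -
  define C' where "C' = sphere (0::'a) 1 \<inter> cball e r"
  have C'B: "C' \<in> sets borel" by (simp add: C'_def)
  have eq: "{\<nu>. \<nu> \<in> sphere 0 1 \<and> norm (\<nu> - \<omega>) \<le> r} = hh (\<omega> - e) -` C'"
    using H_diff by (auto simp: C'_def hh_norm dist_norm norm_minus_commute[of e])
  have "emeasure sphere_measure {\<nu>. \<nu> \<in> sphere 0 1 \<and> norm (\<nu> - \<omega>) \<le> r} = emeasure sphere_measure C'"
    unfolding eq by (rule sigma_hh[OF C'B])
  also have "\<dots> = ennreal (real DIM('a)) * emeasure lborel (sgn -` C' \<inter> ball 0 1)" by (rule sigma_eq[OF C'B])
  also have "emeasure lborel (sgn -` C' \<inter> ball 0 1) \<le> emeasure lborel (cbox (0 + bvec e (-1) (-r)) (0 + bvec e 1 r))"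
  proof (rule emeasure_mono)
    show "sgn -` C' \<inter> ball 0 1 \<subseteq> cbox (0 + bvec e (-1) (-r)) (0 + bvec e 1 r)"
    proof
      fix x :: 'a assume x: "x \<in> sgn -` C' \<inter> ball 0 1"
      then have nx: "norm x < 1" and sx: "norm (sgn x - e) \<le> r"
        by (auto simp: C'_def dist_norm norm_minus_commute)
      have "\<forall>b\<in>Basis. (if b = e then -1 else -r) \<le> (x - 0) \<bullet> b \<and> (x - 0) \<bullet> b \<le> (if b = e then 1 else r)"
      proof
        fix b :: 'a assume b: "b \<in> Basis"
        show "(if b = e then -1 else -r) \<le> (x - 0) \<bullet> b \<and> (x - 0) \<bullet> b \<le> (if b = e then 1 else r)"
        proof (cases "b = e")
          case True
          have "\<bar>x \<bullet> b\<bar> \<le> norm x" by (rule Basis_le_norm[OF b])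
          then show ?thesis using True nx by (auto simp: abs_le_iff)
        next
          case False
          have "sgn x \<bullet> b = (sgn x - e) \<bullet> b" using False b e by (simp add: inner_diff_left inner_Basis)
          then have "\<bar>sgn x \<bullet> b\<bar> \<le> r" using Basis_le_norm[OF b, of "sgn x - e"] sx by simp
          moreover have "x \<bullet> b = norm x * (sgn x \<bullet> b)" by (subst x_sgn) simp
          ultimately have "\<bar>x \<bullet> b\<bar> \<le> norm x * r" by (simp add: abs_mult mult_left_mono)
          also have "\<dots> \<le> r" using nx r by (simp add: mult_left_le_one_le)
          finally show ?thesis using False by (auto simp: abs_le_iff)
        qed
      qed
      then show "x \<in> cbox (0 + bvec e (-1) (-r)) (0 + bvec e 1 r)" unfolding mem_cbox_bvec[OF e] .
    qed
  qed simp
  also have "emeasure lborel (cbox (0 + bvec e (-1) (-r)) (0 + bvec e 1 r)) = ennreal ((1 - -1) * (r - -r) ^ (DIM('a) - 1))"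
    using r by (intro cbox_measure[OF e]) auto
  finally show ?thesis by (simp add: ennreal_mult' mult_left_mono)
qed


lemma H_proj_norm: "norm (hh (\<omega> - e) z - (z \<bullet> \<omega>) *\<^sub>R e) = norm (z - (z \<bullet> \<omega>) *\<^sub>R \<omega>)"
proof -
  have "hh (\<omega> - e) (z - (z \<bullet> \<omega>) *\<^sub>R \<omega>) = hh (\<omega> - e) z - (z \<bullet> \<omega>) *\<^sub>R e"
    using H_proj[OF e w, of z] H_inner_e[OF e w, of z] by simp
  then show ?thesis using hh_norm[of "\<omega> - e" "z - (z \<bullet> \<omega>) *\<^sub>R \<omega>"] by simp
qed

lemma cap_low:
  assumes r: "0 < r" "r \<le> 1/2"
  shows "ennreal (real DIM('a) * ((1/4) * (r / DIM('a)) ^ (DIM('a) - 1)))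
     \<le> emeasure sphere_measure {\<nu>. \<nu> \<in> sphere 0 1 \<and> 0 < \<nu> \<bullet> \<omega> \<and> norm (\<nu> - (\<nu> \<bullet> \<omega>) *\<^sub>R \<omega>) < r}"
proof -
  define n where "n = real DIM('a)"
  have n1: "1 \<le> n" by (simp add: n_def DIM_positive Suc_le_eq)
  define q where "q = r / (2 * n)"
  have q: "0 < q" using r n1 by (simp add: q_def)
  define C' where "C' = {\<nu>. \<nu> \<in> sphere (0::'a) 1 \<and> 0 < \<nu> \<bullet> e \<and> norm (\<nu> - (\<nu> \<bullet> e) *\<^sub>R e) < r}"
  have C'B: "C' \<in> sets borel" unfolding C'_def using cap_low_borel[of e r] .
  have eq: "{\<nu>. \<nu> \<in> sphere 0 1 \<and> 0 < \<nu> \<bullet> \<omega> \<and> norm (\<nu> - (\<nu> \<bullet> \<omega>) *\<^sub>R \<omega>) < r} = hh (\<omega> - e) -` C'"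
    using H_proj_norm H_inner_e[OF e w] by (auto simp: C'_def hh_norm)
  define K where "K = box (0 + bvec e (1/2) (-q)) (0 + bvec e (3/4) q)"
  have mK: "emeasure lborel K = ennreal ((3/4 - 1/2) * (q - -q) ^ (DIM('a) - 1))"
    unfolding K_def using q by (intro box_measure[OF e]) auto
  have sub: "K \<subseteq> sgn -` C' \<inter> ball 0 1"
  proof
    fix x :: 'a assume x: "x \<in> K"
    then have xb: "\<forall>b\<in>Basis. (if b = e then 1/2 else -q) < (x - 0) \<bullet> b \<and> (x - 0) \<bullet> b < (if b = e then 3/4 else q)"
      unfolding K_def mem_box_bvec[OF e] .
    have xe: "1/2 < x \<bullet> e" "x \<bullet> e < 3/4" using xb e by auto
    have "norm x \<le> (\<Sum>b\<in>Basis. \<bar>x \<bullet> b\<bar>)" by (rule norm_le_l1)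
    also have "\<dots> < (\<Sum>b\<in>Basis. if b = e then 3/4 else q)"
    proof (rule sum_strict_mono)
      fix b :: 'a assume b: "b \<in> Basis"
      show "\<bar>x \<bullet> b\<bar> < (if b = e then 3/4 else q)" using xb b xe by (auto simp: abs_less_iff)
    qed auto
    also have "\<dots> = 3/4 + real (DIM('a) - 1) * q" by (rule sum_Basis_if[OF e])
    also have "\<dots> \<le> 1"
    proof -
      have "real (DIM('a) - 1) * q \<le> n * q" using q by (intro mult_right_mono) (auto simp: n_def)
      also have "n * q = r/2" using n1 by (simp add: q_def)
      finally show ?thesis using r by simp
    qed
    finally have nx: "norm x < 1" .
    have nx2: "1/2 < norm x" using Basis_le_norm[OF e, of x] xe by simp
    then have x0: "x \<noteq> 0" by auto
    define v where "v = x - (x \<bullet> e) *\<^sub>R e"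
    have "norm v \<le> (\<Sum>b\<in>Basis. \<bar>v \<bullet> b\<bar>)" by (rule norm_le_l1)
    also have "\<dots> \<le> (\<Sum>b\<in>Basis. if b = e then 0 else q)"
    proof (rule sum_mono)
      fix b :: 'a assume b: "b \<in> Basis"
      show "\<bar>v \<bullet> b\<bar> \<le> (if b = e then 0 else q)"
        using xb b e by (auto simp: v_def inner_diff_left inner_Basis abs_le_iff)
    qed
    also have "\<dots> = real (DIM('a) - 1) * q" using sum_Basis_if[OF e, of 0 q] by simp
    also have "\<dots> < n * q" using q by (intro mult_strict_right_mono) (auto simp: n_def)
    also have "n * q = r/2" using n1 by (simp add: q_def)
    finally have nv: "norm v < r/2" .
    have sv: "sgn x - (sgn x \<bullet> e) *\<^sub>R e = v /\<^sub>R norm x"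
      by (simp add: sgn_div_norm v_def algebra_simps)
    have "norm (v /\<^sub>R norm x) = norm v / norm x" by (simp add: divide_inverse mult.commute)
    also have "\<dots> \<le> norm v / (1/2)" using nx2 by (intro divide_left_mono) auto
    also have "\<dots> < r" using nv by simp
    finally have "norm (sgn x - (sgn x \<bullet> e) *\<^sub>R e) < r" using sv by simp
    moreover have "0 < sgn x \<bullet> e"
    proof -
      have "sgn x \<bullet> e = (x \<bullet> e) / norm x" by (simp add: sgn_div_norm divide_inverse mult.commute)
      moreover have "0 < (x \<bullet> e) / norm x" using xe nx2 by (intro divide_pos_pos) auto
      ultimately show ?thesis by simp
    qed
    moreover have "sgn x \<in> sphere 0 1" using x0 by (simp add: norm_sgn)
    ultimately show "x \<in> sgn -` C' \<inter> ball 0 1" using nx by (simp add: C'_def)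
  qed
  have "ennreal (real DIM('a)) * emeasure lborel K \<le> ennreal (real DIM('a)) * emeasure lborel (sgn -` C' \<inter> ball 0 1)"
  proof (intro mult_left_mono emeasure_mono sub)
    show "sgn -` C' \<inter> ball 0 1 \<in> sets lborel" using measurable_sets[OF borel_measurable_sgn C'B] by auto
  qed auto
  also have "\<dots> = emeasure sphere_measure C'" by (rule sigma_eq[OF C'B, symmetric])
  also have "\<dots> = emeasure sphere_measure {\<nu>. \<nu> \<in> sphere 0 1 \<and> 0 < \<nu> \<bullet> \<omega> \<and> norm (\<nu> - (\<nu> \<bullet> \<omega>) *\<^sub>R \<omega>) < r}"
    unfolding eq by (rule sigma_hh[OF C'B, symmetric])
  finally have fin: "ennreal (real DIM('a)) * emeasure lborel K \<le> emeasure sphere_measure {\<nu>. \<nu> \<in> sphere 0 1 \<and> 0 < \<nu> \<bullet> \<omega> \<and> norm (\<nu> - (\<nu> \<bullet> \<omega>) *\<^sub>R \<omega>) < r}" .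
  have "(3/4 - 1/2) * (q - -q) ^ (DIM('a) - 1) = (1/4) * (r / DIM('a)) ^ (DIM('a) - 1)"
    by (simp add: q_def n_def)
  then have "ennreal (real DIM('a)) * emeasure lborel K = ennreal (real DIM('a)) * ennreal ((1/4) * (r / DIM('a)) ^ (DIM('a) - 1))"
    using mK by simp
  also have "\<dots> = ennreal (real DIM('a) * ((1/4) * (r / DIM('a)) ^ (DIM('a) - 1)))"
    by (rule ennreal_mult[symmetric]) (use r in auto)
  finally have "ennreal (real DIM('a)) * emeasure lborel K = ennreal (real DIM('a) * ((1/4) * (r / DIM('a)) ^ (DIM('a) - 1)))" .
  then show ?thesis using fin by simp
qed

end

lemma times_borel:
  fixes Y C :: "'a::euclidean_space set"
  assumes "Y \<in> sets borel" "C \<in> sets borel"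
  shows "Y \<times> C \<in> sets borel"
proof -
  have "Y \<times> C \<in> sets ((borel :: 'a measure) \<Otimes>\<^sub>M (borel :: 'a measure))" using assms by auto
  then show ?thesis by (simp only: borel_prod)
qed

lemma pow2m: "(x::real) ^ (m * 2) = x ^ m * x ^ m"
  by (simp add: power_mult power2_eq_square)

lemma pow_split: "(t::real) ^ (2 * Suc m) = t^2 * (t^m * t^m)"
proof -
  have "2 * Suc m = 2 + (m + m)" by simp
  then show ?thesis by (simp only: power_add)
qed

lemma alg1:
  fixes t n :: real
  shows "2 * t^2 * (2 * t) ^ m * (n * (2 * (2 * t) ^ m)) = (n * 4 ^ (Suc m)) * t ^ (2 * Suc m)"
proof -
  have a: "(2 * t)^m = 2^m * t^m" by (rule power_mult_distrib)
  have b: "(4::real) ^ Suc m = 4 * (2^m * 2^m)"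
  proof -
    have "(4::real) ^ m = (2 * 2) ^ m" by simp
    also have "\<dots> = 2^m * 2^m" by (rule power_mult_distrib)
    finally show ?thesis by simp
  qed
  show ?thesis unfolding a b pow_split by algebra
qed

lemma ex_basis: "\<exists>e::'a::euclidean_space. e \<in> Basis" using nonempty_Basis by blast

lemma vol_small_upper:
  fixes x \<omega> :: "'a::euclidean_space" and \<tau> :: real
  assumes d: "DIM('a) \<ge> 2" and c: "(x, \<omega>) \<in> cosphere" and \<tau>: "0 < \<tau>"
  shows "vol (sR_ball (x, \<omega>) \<tau>) \<le> ennreal ((DIM('a) * 4 ^ DIM('a)) * \<tau> ^ (2 * DIM('a)))"
proof -
  obtain e :: 'a where e: "e \<in> Basis" using ex_basis by blast
  have w: "norm \<omega> = 1" using c by (simp add: cosphere_def)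
  obtain m where m: "DIM('a) = Suc m" using DIM_positive by (metis Suc_pred)
  obtain Y where Y: "Y \<in> sets borel" "{y. norm (y - x) \<le> \<tau> \<and> \<bar>(y - x) \<bullet> \<omega>\<bar> \<le> \<tau>^2} \<subseteq> Y"
     "emeasure lborel Y \<le> ennreal (2 * \<tau>^2 * (2 * \<tau>) ^ (DIM('a) - 1))"
    using Y_up[OF e w, of \<tau> x] \<tau> by auto
  define C where "C = {\<nu>. \<nu> \<in> sphere (0::'a) 1 \<and> norm (\<nu> - \<omega>) \<le> \<tau>}"
  have "C = sphere 0 1 \<inter> cball \<omega> \<tau>" by (auto simp: C_def dist_norm norm_minus_commute)
  then have CB: "C \<in> sets borel" by simp
  have sub: "sR_ball (x, \<omega>) \<tau> \<subseteq> Y \<times> C"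
  proof
    fix q assume q: "q \<in> sR_ball (x, \<omega>) \<tau>"
    obtain y \<nu> where qq: "q = (y, \<nu>)" by fastforce
    note b = ball_upper[OF q[unfolded qq]]
    show "q \<in> Y \<times> C" using b Y(2) by (auto simp: qq C_def)
  qed
  have "vol (sR_ball (x, \<omega>) \<tau>) \<le> vol (Y \<times> C)" by (rule vol_mono[OF sub times_borel[OF Y(1) CB]])
  also have "\<dots> = emeasure lborel Y * emeasure sphere_measure C" by (rule vol_Times[OF Y(1) CB])
  also have "\<dots> \<le> ennreal (2 * \<tau>^2 * (2 * \<tau>) ^ (DIM('a) - 1)) * ennreal (real DIM('a) * (2 * (2 * \<tau>) ^ (DIM('a) - 1)))"
    using cap_up[OF e w, of \<tau>] \<tau> unfolding C_def by (intro mult_mono Y(3)) auto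
  also have "\<dots> = ennreal (2 * \<tau>^2 * (2 * \<tau>) ^ (DIM('a) - 1) * (real DIM('a) * (2 * (2 * \<tau>) ^ (DIM('a) - 1))))"
    by (rule ennreal_mult[symmetric]) (use \<tau> in auto)
  also have "2 * \<tau>^2 * (2 * \<tau>) ^ (DIM('a) - 1) * (real DIM('a) * (2 * (2 * \<tau>) ^ (DIM('a) - 1)))
      = (DIM('a) * 4 ^ DIM('a)) * \<tau> ^ (2 * DIM('a))"
    unfolding m diff_Suc_1 of_nat_mult of_nat_power of_nat_numeral by (rule alg1)
  finally show ?thesis .
qed


lemma alg2:
  fixes t n :: real
  shows "2 * (t/10)^2 * (2 * (t/10) / n) ^ m * (n * ((1/4) * ((t/10) / n) ^ m)) =
    (2 * (1/10)^2 * (2 * (1/10) / n) ^ m * (n * ((1/4) * ((1/10) / n) ^ m))) * t ^ (2 * Suc m)"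
proof -
  have e1: "t/10 = (1/10) * t" "2 * (t/10) / n = (2 * (1/10) / n) * t" "(t/10) / n = ((1/10) / n) * t"
    by simp_all
  show ?thesis unfolding e1(2,3) unfolding e1(1) power_mult_distrib pow_split by algebra
qed

lemma vol_small_lower:
  fixes x \<omega> :: "'a::euclidean_space" and \<tau> :: real
  assumes d: "DIM('a) \<ge> 2" and c: "(x, \<omega>) \<in> cosphere" and \<tau>: "0 < \<tau>" "\<tau> < 1"
  shows "ennreal ((2 * (1/10)^2 * (2 * (1/10) / DIM('a)) ^ (DIM('a) - 1) *
      (DIM('a) * ((1/4) * ((1/10) / DIM('a)) ^ (DIM('a) - 1)))) * \<tau> ^ (2 * DIM('a)))
    \<le> vol (sR_ball (x, \<omega>) \<tau>)"
proof -
  obtain e :: 'a where e: "e \<in> Basis" using ex_basis by blast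
  have w: "norm \<omega> = 1" using c by (simp add: cosphere_def)
  obtain m where m: "DIM('a) = Suc m" using DIM_positive by (metis Suc_pred)
  define \<delta> where "\<delta> = \<tau> / 10"
  have \<delta>: "0 < \<delta>" "\<delta> \<le> 1/2" "9 * \<delta> < \<tau>" using \<tau> by (auto simp: \<delta>_def)
  obtain Y where Y: "Y \<in> sets borel" "Y \<subseteq> {y. \<bar>(y - x) \<bullet> \<omega>\<bar> < \<delta>^2 \<and> norm ((y - x) - ((y - x) \<bullet> \<omega>) *\<^sub>R \<omega>) < \<delta>}"
     "emeasure lborel Y = ennreal (2 * \<delta>^2 * (2 * \<delta> / DIM('a)) ^ (DIM('a) - 1))"
    using Y_low[OF e w \<delta>(1), of x] by blast
  define C where "C = {\<nu>. \<nu> \<in> sphere 0 1 \<and> 0 < \<nu> \<bullet> \<omega> \<and> norm (\<nu> - (\<nu> \<bullet> \<omega>) *\<^sub>R \<omega>) < \<delta>}"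
  have CB: "C \<in> sets borel" unfolding C_def by (rule cap_low_borel)
  have mC: "ennreal (real DIM('a) * ((1/4) * (\<delta> / DIM('a)) ^ (DIM('a) - 1))) \<le> emeasure sphere_measure C"
    unfolding C_def by (rule cap_low[OF e w \<delta>(1,2)])
  have sub: "Y \<times> C \<subseteq> sR_ball (x, \<omega>) \<tau>"
  proof
    fix q assume q: "q \<in> Y \<times> C"
    obtain y \<nu> where qq: "q = (y, \<nu>)" by fastforce
    have y: "\<bar>(y - x) \<bullet> \<omega>\<bar> < \<delta>^2" "norm ((y - x) - ((y - x) \<bullet> \<omega>) *\<^sub>R \<omega>) < \<delta>" using q Y(2) qq by auto
    have nu: "norm \<nu> = 1" "0 < \<nu> \<bullet> \<omega>" "norm (\<nu> - (\<nu> \<bullet> \<omega>) *\<^sub>R \<omega>) < \<delta>" using q qq by (auto simp: C_def)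
    have "reach (x, \<omega>) (y, \<nu>) (9 * \<delta>)"
      by (rule reach_small[OF d w nu(1) \<delta>(1,2) y]) (use nu in auto)
    then show "q \<in> sR_ball (x, \<omega>) \<tau>" unfolding qq by (rule reach_ball) (use \<delta> in auto)
  qed
  have "ennreal (2 * \<delta>^2 * (2 * \<delta> / DIM('a)) ^ (DIM('a) - 1)) * ennreal (real DIM('a) * ((1/4) * (\<delta> / DIM('a)) ^ (DIM('a) - 1)))
      \<le> emeasure lborel Y * emeasure sphere_measure C"
    using Y(3) mC by (intro mult_mono) auto
  also have "\<dots> = vol (Y \<times> C)" by (rule vol_Times[OF Y(1) CB, symmetric])
  also have "\<dots> \<le> vol (sR_ball (x, \<omega>) \<tau>)" by (rule vol_mono[OF sub ball_borel[OF d]])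
  finally have fin: "ennreal (2 * \<delta>^2 * (2 * \<delta> / DIM('a)) ^ (DIM('a) - 1)) * ennreal (real DIM('a) * ((1/4) * (\<delta> / DIM('a)) ^ (DIM('a) - 1)))
      \<le> vol (sR_ball (x, \<omega>) \<tau>)" .
  have "ennreal (2 * \<delta>^2 * (2 * \<delta> / DIM('a)) ^ (DIM('a) - 1)) * ennreal (real DIM('a) * ((1/4) * (\<delta> / DIM('a)) ^ (DIM('a) - 1)))
     = ennreal (2 * \<delta>^2 * (2 * \<delta> / DIM('a)) ^ (DIM('a) - 1) * (real DIM('a) * ((1/4) * (\<delta> / DIM('a)) ^ (DIM('a) - 1))))"
    by (rule ennreal_mult[symmetric]) (use \<delta> in auto)
  also have "2 * \<delta>^2 * (2 * \<delta> / DIM('a)) ^ (DIM('a) - 1) * (real DIM('a) * ((1/4) * (\<delta> / DIM('a)) ^ (DIM('a) - 1)))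
     = (2 * (1/10)^2 * (2 * (1/10) / DIM('a)) ^ (DIM('a) - 1) *
      (DIM('a) * ((1/4) * ((1/10) / DIM('a)) ^ (DIM('a) - 1)))) * \<tau> ^ (2 * DIM('a))"
    unfolding \<delta>_def m diff_Suc_1 by (rule alg2)
  finally show ?thesis using fin by simp
qed

lemma vol_large_upper:
  fixes x \<omega> :: "'a::euclidean_space" and \<tau> :: real
  assumes c: "(x, \<omega>) \<in> cosphere" and \<tau>: "0 \<le> \<tau>"
  shows "vol (sR_ball (x, \<omega>) \<tau>) \<le> ennreal ((2 ^ DIM('a) * measure sphere_measure (UNIV :: 'a set)) * \<tau> ^ DIM('a))"
proof -
  obtain e :: 'a where e: "e \<in> Basis" using ex_basis by blast
  obtain m where m: "DIM('a) = Suc m" using DIM_positive by (metis Suc_pred)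
  define Y where "Y = cbox (x + bvec e (-\<tau>) (-\<tau>)) (x + bvec e \<tau> \<tau>)"
  have YB: "Y \<in> sets borel" by (simp add: Y_def)
  have mY: "emeasure lborel Y = ennreal ((\<tau> - - \<tau>) * (\<tau> - - \<tau>) ^ (DIM('a) - 1))"
    unfolding Y_def using \<tau> by (intro cbox_measure[OF e]) auto
  have sub: "sR_ball (x, \<omega>) \<tau> \<subseteq> Y \<times> UNIV"
  proof
    fix q assume q: "q \<in> sR_ball (x, \<omega>) \<tau>"
    obtain y \<nu> where qq: "q = (y, \<nu>)" by fastforce
    have ny: "norm (y - x) \<le> \<tau>" using ball_upper[OF q[unfolded qq]] by simp
    have ab: "\<forall>b\<in>Basis. \<bar>(y - x) \<bullet> b\<bar> \<le> \<tau>" using Basis_le_norm[of _ "y - x"] ny by (meson order_trans)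
    have "\<forall>b\<in>Basis. (if b = e then -\<tau> else -\<tau>) \<le> (y - x) \<bullet> b \<and> (y - x) \<bullet> b \<le> (if b = e then \<tau> else \<tau>)"
      using ab by (auto simp: abs_le_iff)
    then have "y \<in> Y" unfolding Y_def mem_cbox_bvec[OF e] .
    then show "q \<in> Y \<times> UNIV" by (simp add: qq)
  qed
  interpret finite_measure "sphere_measure :: 'a measure" by (rule sphere_finite)
  have sU: "emeasure sphere_measure (UNIV :: 'a set) = ennreal (measure sphere_measure (UNIV :: 'a set))"
    by (rule emeasure_eq_ennreal_measure) simp
  have "vol (sR_ball (x, \<omega>) \<tau>) \<le> vol (Y \<times> UNIV)" by (rule vol_mono[OF sub times_borel[OF YB]]) simp
  also have "\<dots> = emeasure lborel Y * emeasure (sphere_measure :: 'a measure) UNIV" using vol_Times[OF YB, of UNIV] by simp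
  also have "\<dots> = ennreal ((\<tau> - - \<tau>) * (\<tau> - - \<tau>) ^ (DIM('a) - 1)) * ennreal (measure sphere_measure (UNIV :: 'a set))"
    using mY sU by simp
  also have "\<dots> = ennreal ((\<tau> - - \<tau>) * (\<tau> - - \<tau>) ^ (DIM('a) - 1) * measure sphere_measure (UNIV :: 'a set))"
    by (rule ennreal_mult[symmetric]) (use \<tau> in auto)
  also have "(\<tau> - - \<tau>) * (\<tau> - - \<tau>) ^ (DIM('a) - 1) * measure sphere_measure (UNIV :: 'a set)
     = (2 ^ DIM('a) * measure sphere_measure (UNIV :: 'a set)) * \<tau> ^ DIM('a)"
    unfolding m diff_Suc_1 by (simp add: power_mult_distrib)
  finally show ?thesis .
qed


lemma alg3:
  fixes t n K :: real
  shows "(t / (2 * n) - - (t / (2 * n))) * (t / (2 * n) - - (t / (2 * n))) ^ m * K = ((1/n) ^ Suc m * K) * t ^ Suc m"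
proof -
  have eq: "t / (2 * n) - - (t / (2 * n)) = (1/n) * t" by (simp add: field_simps)
  show ?thesis unfolding eq power_mult_distrib power_Suc by algebra
qed

lemma vol_large_lower:
  fixes x \<omega> :: "'a::euclidean_space" and \<tau> :: real
  assumes d: "DIM('a) \<ge> 2" and c: "(x, \<omega>) \<in> cosphere" and \<tau>: "16 \<le> \<tau>"
  shows "ennreal (((1 / DIM('a)) ^ DIM('a) * (DIM('a) * ((1/4) * ((1/2) / DIM('a)) ^ (DIM('a) - 1)))) * \<tau> ^ DIM('a))
    \<le> vol (sR_ball (x, \<omega>) \<tau>)"
proof -
  obtain e :: 'a where e: "e \<in> Basis" using ex_basis by blast
  have w: "norm \<omega> = 1" using c by (simp add: cosphere_def)
  obtain m where m: "DIM('a) = Suc m" using DIM_positive by (metis Suc_pred)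
  define a where "a = \<tau> / (2 * real DIM('a))"
  have a: "0 < a" "DIM('a) * a = \<tau> / 2" using \<tau> by (auto simp: a_def)
  define Y where "Y = box (x + bvec e (-a) (-a)) (x + bvec e a a)"
  have YB: "Y \<in> sets borel" by (simp add: Y_def)
  have mY: "emeasure lborel Y = ennreal ((a - - a) * (a - - a) ^ (DIM('a) - 1))"
    unfolding Y_def using a by (intro box_measure[OF e]) auto
  define C where "C = {\<nu>. \<nu> \<in> sphere 0 1 \<and> 0 < \<nu> \<bullet> \<omega> \<and> norm (\<nu> - (\<nu> \<bullet> \<omega>) *\<^sub>R \<omega>) < 1/2}"
  have CB: "C \<in> sets borel" unfolding C_def by (rule cap_low_borel)
  have mC: "ennreal (real DIM('a) * ((1/4) * ((1/2) / DIM('a)) ^ (DIM('a) - 1))) \<le> emeasure sphere_measure C"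
    unfolding C_def by (rule cap_low[OF e w]) auto
  have sub: "Y \<times> C \<subseteq> sR_ball (x, \<omega>) \<tau>"
  proof
    fix q assume q: "q \<in> Y \<times> C"
    obtain y \<nu> where qq: "q = (y, \<nu>)" by fastforce
    have "y \<in> Y" using q qq by auto
    then have yb: "\<forall>b\<in>Basis. (if b = e then -a else -a) < (y - x) \<bullet> b \<and> (y - x) \<bullet> b < (if b = e then a else a)"
      unfolding Y_def mem_box_bvec[OF e] .
    have nu: "norm \<nu> = 1" using q qq by (auto simp: C_def)
    have "norm (y - x) \<le> (\<Sum>b\<in>Basis. \<bar>(y - x) \<bullet> b\<bar>)" by (rule norm_le_l1)
    also have "\<dots> < (\<Sum>b\<in>(Basis::'a set). a)"
      by (rule sum_strict_mono) (use yb in \<open>auto simp: abs_less_iff\<close>)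
    also have "\<dots> = \<tau> / 2" using a by simp
    finally have ny: "norm (y - x) < \<tau> / 2" .
    have r: "reach (x, \<omega>) (y, \<nu>) (norm (y - x) + 2 * pi)" by (rule reach_large[OF d w nu])
    have "norm (y - x) + 2 * pi < \<tau>" using ny \<tau> pi_less_4 by linarith
    then show "q \<in> sR_ball (x, \<omega>) \<tau>" unfolding qq by (intro reach_ball[OF r]) auto
  qed
  have "ennreal ((a - - a) * (a - - a) ^ (DIM('a) - 1)) * ennreal (real DIM('a) * ((1/4) * ((1/2) / DIM('a)) ^ (DIM('a) - 1)))
      \<le> emeasure lborel Y * emeasure sphere_measure C"
    using mY mC by (intro mult_mono) auto
  also have "\<dots> = vol (Y \<times> C)" by (rule vol_Times[OF YB CB, symmetric])
  also have "\<dots> \<le> vol (sR_ball (x, \<omega>) \<tau>)" by (rule vol_mono[OF sub ball_borel[OF d]])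
  finally have fin: "ennreal ((a - - a) * (a - - a) ^ (DIM('a) - 1)) * ennreal (real DIM('a) * ((1/4) * ((1/2) / DIM('a)) ^ (DIM('a) - 1)))
      \<le> vol (sR_ball (x, \<omega>) \<tau>)" .
  have "ennreal ((a - - a) * (a - - a) ^ (DIM('a) - 1)) * ennreal (real DIM('a) * ((1/4) * ((1/2) / DIM('a)) ^ (DIM('a) - 1)))
     = ennreal ((a - - a) * (a - - a) ^ (DIM('a) - 1) * (real DIM('a) * ((1/4) * ((1/2) / DIM('a)) ^ (DIM('a) - 1))))"
    by (rule ennreal_mult[symmetric]) (use a in auto)
  also have "(a - - a) * (a - - a) ^ (DIM('a) - 1) * (real DIM('a) * ((1/4) * ((1/2) / DIM('a)) ^ (DIM('a) - 1)))
     = ((1 / DIM('a)) ^ DIM('a) * (DIM('a) * ((1/4) * ((1/2) / DIM('a)) ^ (DIM('a) - 1)))) * \<tau> ^ DIM('a)"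
    unfolding a_def m diff_Suc_1 by (rule alg3)
  finally show ?thesis using fin by simp
qed

lemma ball_mono: "\<tau>1 \<le> \<tau>2 \<Longrightarrow> sR_ball p \<tau>1 \<subseteq> sR_ball p \<tau>2"
  unfolding sR_ball_def by (auto intro: order_less_le_trans ennreal_leI)

theorem mainTheorem2:
  assumes "DIM('a::euclidean_space) \<ge> 2"
  shows "\<exists>C>0. (\<forall>x (w::'a) \<tau>. (x, w) \<in> cosphere \<longrightarrow>
            ((0 < \<tau> \<and> \<tau> < 1 \<longrightarrow>
               ennreal (\<tau> ^ (2 * DIM('a)) / C) \<le> vol (sR_ball (x, w) \<tau>) \<and>
               vol (sR_ball (x, w) \<tau>) \<le> ennreal (C * \<tau> ^ (2 * DIM('a)))) \<and>
             (1 \<le> \<tau> \<longrightarrow>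
               ennreal (\<tau> ^ DIM('a) / C) \<le> vol (sR_ball (x, w) \<tau>) \<and>
               vol (sR_ball (x, w) \<tau>) \<le> ennreal (C * \<tau> ^ DIM('a))))) \<and>
          (\<forall>x (w::'a) \<tau> c. (x, w) \<in> cosphere \<longrightarrow> 0 < \<tau> \<longrightarrow> 1 \<le> c \<longrightarrow>
             vol (sR_ball (x, w) (c * \<tau>)) \<le>
               ennreal (C ^ 2 * c ^ (2 * DIM('a))) * vol (sR_ball (x, w) \<tau>))"
proof -
  note d = assms
  define N where "N = DIM('a)"
  have Npos: "0 < real N" by (simp add: N_def)
  define s where "s = measure (sphere_measure :: 'a measure) UNIV"
  have s0: "0 \<le> s" by (simp add: s_def)
  define A1 :: real where "A1 = real (DIM('a) * 4 ^ DIM('a))"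
  define A2 :: real where "A2 = 2 ^ DIM('a) * s"
  define B1 :: real where "B1 = 2 * (1/10)^2 * (2 * (1/10) / DIM('a)) ^ (DIM('a) - 1) *
      (DIM('a) * ((1/4) * ((1/10) / DIM('a)) ^ (DIM('a) - 1)))"
  define B2 :: real where "B2 = (1 / DIM('a)) ^ DIM('a) * (DIM('a) * ((1/4) * ((1/2) / DIM('a)) ^ (DIM('a) - 1)))"
  define B3 :: real where "B3 = min B2 (B1 * (1/2) ^ (2 * DIM('a)) / 16 ^ DIM('a))"
  have B1p: "0 < B1" unfolding B1_def by (intro mult_pos_pos) auto
  have B2p: "0 < B2" unfolding B2_def by (intro mult_pos_pos) auto
  have B3p: "0 < B3" unfolding B3_def using B1p B2p by auto
  define C where "C = max (max A1 A2) (max (1/B1) (max (1/B3) 1))"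
  have C1: "1 \<le> C" and CA1: "A1 \<le> C" and CA2: "A2 \<le> C" and CB1': "1/B1 \<le> C" and CB3': "1/B3 \<le> C"
    by (auto simp: C_def)
  have Cp: "0 < C" using C1 by simp
  have CB1: "1/C \<le> B1"
    using CB1' B1p Cp by (simp add: field_simps)
  have CB3: "1/C \<le> B3"
    using CB3' B3p Cp by (simp add: field_simps)
  have small_low: "ennreal (\<tau> ^ (2 * DIM('a)) / C) \<le> vol (sR_ball (x, w) \<tau>)"
    if c: "(x, w) \<in> cosphere" and t: "0 < \<tau>" "\<tau> < 1" for x w :: 'a and \<tau> :: real
  proof -
    have "\<tau> ^ (2 * DIM('a)) / C = (1/C) * \<tau> ^ (2 * DIM('a))" by simp
    also have "\<dots> \<le> B1 * \<tau> ^ (2 * DIM('a))" using CB1 t by (intro mult_right_mono) auto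
    finally have "ennreal (\<tau> ^ (2 * DIM('a)) / C) \<le> ennreal (B1 * \<tau> ^ (2 * DIM('a)))" by (rule ennreal_leI)
    also have "\<dots> \<le> vol (sR_ball (x, w) \<tau>)" unfolding B1_def by (rule vol_small_lower[OF d c t])
    finally show ?thesis .
  qed
  have small_up: "vol (sR_ball (x, w) \<tau>) \<le> ennreal (C * \<tau> ^ (2 * DIM('a)))"
    if c: "(x, w) \<in> cosphere" and t: "0 < \<tau>" for x w :: 'a and \<tau> :: real
  proof -
    have "vol (sR_ball (x, w) \<tau>) \<le> ennreal (A1 * \<tau> ^ (2 * DIM('a)))"
      unfolding A1_def by (rule vol_small_upper[OF d c t])
    also have "\<dots> \<le> ennreal (C * \<tau> ^ (2 * DIM('a)))" using CA1 t by (intro ennreal_leI mult_right_mono) auto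
    finally show ?thesis .
  qed
  have large_up: "vol (sR_ball (x, w) \<tau>) \<le> ennreal (C * \<tau> ^ DIM('a))"
    if c: "(x, w) \<in> cosphere" and t: "0 \<le> \<tau>" for x w :: 'a and \<tau> :: real
  proof -
    have "vol (sR_ball (x, w) \<tau>) \<le> ennreal (A2 * \<tau> ^ DIM('a))"
      unfolding A2_def s_def by (rule vol_large_upper[OF c t])
    also have "\<dots> \<le> ennreal (C * \<tau> ^ DIM('a))" using CA2 t by (intro ennreal_leI mult_right_mono) auto
    finally show ?thesis .
  qed
  have large_low: "ennreal (\<tau> ^ DIM('a) / C) \<le> vol (sR_ball (x, w) \<tau>)"
    if c: "(x, w) \<in> cosphere" and t: "1 \<le> \<tau>" for x w :: 'a and \<tau> :: real
  proof -
    have "\<tau> ^ DIM('a) / C = (1/C) * \<tau> ^ DIM('a)" by simp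
    also have "\<dots> \<le> B3 * \<tau> ^ DIM('a)" using CB3 t by (intro mult_right_mono) auto
    finally have le1: "ennreal (\<tau> ^ DIM('a) / C) \<le> ennreal (B3 * \<tau> ^ DIM('a))" by (rule ennreal_leI)
    have "ennreal (B3 * \<tau> ^ DIM('a)) \<le> vol (sR_ball (x, w) \<tau>)"
    proof (cases "16 \<le> \<tau>")
      case True
      have "ennreal (B3 * \<tau> ^ DIM('a)) \<le> ennreal (B2 * \<tau> ^ DIM('a))"
        using t by (intro ennreal_leI mult_right_mono) (auto simp: B3_def)
      also have "\<dots> \<le> vol (sR_ball (x, w) \<tau>)" unfolding B2_def by (rule vol_large_lower[OF d c True])
      finally show ?thesis .
    next
      case False
      have tN: "\<tau> ^ DIM('a) \<le> 16 ^ DIM('a)" using False t by (intro power_mono) auto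
      have "B3 * \<tau> ^ DIM('a) \<le> (B1 * (1/2) ^ (2 * DIM('a)) / 16 ^ DIM('a)) * \<tau> ^ DIM('a)"
        using t by (intro mult_right_mono) (auto simp: B3_def)
      also have "\<dots> \<le> (B1 * (1/2) ^ (2 * DIM('a)) / 16 ^ DIM('a)) * 16 ^ DIM('a)"
        using tN B1p by (intro mult_left_mono) auto
      also have "\<dots> = B1 * (1/2) ^ (2 * DIM('a))" by simp
      finally have "ennreal (B3 * \<tau> ^ DIM('a)) \<le> ennreal (B1 * (1/2) ^ (2 * DIM('a)))" by (rule ennreal_leI)
      also have "\<dots> \<le> vol (sR_ball (x, w) (1/2))" unfolding B1_def by (rule vol_small_lower[OF d c]) auto
      also have "\<dots> \<le> vol (sR_ball (x, w) \<tau>)"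
        by (rule vol_mono[OF ball_mono ball_borel[OF d]]) (use t in auto)
      finally show ?thesis .
    qed
    with le1 show ?thesis by (rule order_trans)
  qed
  have doubling: "vol (sR_ball (x, w) (c * \<tau>)) \<le> ennreal (C ^ 2 * c ^ (2 * DIM('a))) * vol (sR_ball (x, w) \<tau>)"
    if cw: "(x, w) \<in> cosphere" and t: "0 < \<tau>" and cc: "1 \<le> c" for x w :: 'a and \<tau> c :: real
  proof -
    have K0: "0 \<le> C ^ 2 * c ^ (2 * DIM('a))" using cc by simp
    have ct: "0 < c * \<tau>" using cc t by simp
    show ?thesis
    proof (cases "\<tau> < 1")
      case True
      have "ennreal (C ^ 2 * c ^ (2 * DIM('a))) * ennreal (\<tau> ^ (2 * DIM('a)) / C) \<le> ennreal (C ^ 2 * c ^ (2 * DIM('a))) * vol (sR_ball (x, w) \<tau>)"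
        by (intro mult_left_mono small_low[OF cw t True]) auto
      note h1 = this
      have h2: "ennreal (C ^ 2 * c ^ (2 * DIM('a))) * ennreal (\<tau> ^ (2 * DIM('a)) / C) = ennreal (C * (c * \<tau>) ^ (2 * DIM('a)))"
      proof -
        have "ennreal (C ^ 2 * c ^ (2 * DIM('a))) * ennreal (\<tau> ^ (2 * DIM('a)) / C) = ennreal (C ^ 2 * c ^ (2 * DIM('a)) * (\<tau> ^ (2 * DIM('a)) / C))"
          by (rule ennreal_mult[symmetric]) (use K0 t Cp in auto)
        also have "C ^ 2 * c ^ (2 * DIM('a)) * (\<tau> ^ (2 * DIM('a)) / C) = C * (c * \<tau>) ^ (2 * DIM('a))"
          using Cp by (simp add: power_mult_distrib power2_eq_square)
        finally show ?thesis .
      qed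
      have h3: "vol (sR_ball (x, w) (c * \<tau>)) \<le> ennreal (C * (c * \<tau>) ^ (2 * DIM('a)))"
      proof (cases "c * \<tau> < 1")
        case True
        then show ?thesis using small_up[OF cw ct] by simp
      next
        case False
        have "vol (sR_ball (x, w) (c * \<tau>)) \<le> ennreal (C * (c * \<tau>) ^ DIM('a))" using large_up[OF cw] ct by simp
        also have "\<dots> \<le> ennreal (C * (c * \<tau>) ^ (2 * DIM('a)))"
          using False Cp by (intro ennreal_leI mult_left_mono power_increasing) auto
        finally show ?thesis .
      qed
      show ?thesis using order_trans[OF h3[folded h2] h1] .
    next
      case False
      then have t1: "1 \<le> \<tau>" by simp
      have "ennreal (C ^ 2 * c ^ (2 * DIM('a))) * ennreal (\<tau> ^ DIM('a) / C) \<le> ennreal (C ^ 2 * c ^ (2 * DIM('a))) * vol (sR_ball (x, w) \<tau>)"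
        by (intro mult_left_mono large_low[OF cw t1]) auto
      note h1 = this
      have h2: "ennreal (C ^ 2 * c ^ (2 * DIM('a))) * ennreal (\<tau> ^ DIM('a) / C) = ennreal (C * c ^ (2 * DIM('a)) * \<tau> ^ DIM('a))"
      proof -
        have "ennreal (C ^ 2 * c ^ (2 * DIM('a))) * ennreal (\<tau> ^ DIM('a) / C) = ennreal (C ^ 2 * c ^ (2 * DIM('a)) * (\<tau> ^ DIM('a) / C))"
          by (rule ennreal_mult[symmetric]) (use K0 t Cp in auto)
        also have "C ^ 2 * c ^ (2 * DIM('a)) * (\<tau> ^ DIM('a) / C) = C * c ^ (2 * DIM('a)) * \<tau> ^ DIM('a)"
          using Cp by (simp add: power2_eq_square)
        finally show ?thesis .
      qed
      have h3: "vol (sR_ball (x, w) (c * \<tau>)) \<le> ennreal (C * c ^ (2 * DIM('a)) * \<tau> ^ DIM('a))"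
      proof -
        have "vol (sR_ball (x, w) (c * \<tau>)) \<le> ennreal (C * (c * \<tau>) ^ DIM('a))" using large_up[OF cw] ct by simp
        also have "C * (c * \<tau>) ^ DIM('a) = C * c ^ DIM('a) * \<tau> ^ DIM('a)" by (simp add: power_mult_distrib)
        also have "\<dots> \<le> C * c ^ (2 * DIM('a)) * \<tau> ^ DIM('a)"
          using cc Cp t by (intro mult_right_mono mult_left_mono power_increasing) auto
        finally show ?thesis by (simp add: ennreal_leI)
      qed
      show ?thesis using order_trans[OF h3[folded h2] h1] .
    qed
  qed
  show ?thesis
    apply (intro exI[of _ C] conjI allI impI)
    subgoal by (rule Cp)
    subgoal by (rule small_low) auto
    subgoal by (rule small_up) auto
    subgoal by (rule large_low) auto
    subgoal by (rule large_up) auto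
    subgoal by (rule doubling) auto
    done
qed

end
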